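(* Let $E\in\mathcal{C}(J,\{c_k\},\{n_k\},\{a_k\})$ be a Cantor-like set and let $0<\theta<1$. Then $$\dim_L^\theta E=\liminf_{k\to+\infty}\frac{\log (n_{k+1}\cdots n_{l(\theta,k)})}{(1-\frac1\theta)\log\delta_k},$$ where $\delta_k=\prod_{i=1}^k c_i$ and $l(\theta,k)=\max\{l\in\mathbb{Z}^+:\delta_l\ge(\delta_k)^{1/\theta}\}$ for $k\ge1$.
   Context: Cantor-like sets: let $\{a_k\}_{k\ge1}\subset\mathbb{R}^+$ with $\sum_k a_k<+\infty$; $\{n_k\}\subset\mathbb{Z}^+$ with $n_k\ge2$; $\{c_k\}\subset\mathbb{R}^+$ with $0<c_k<1$ and $\inf_k c_k>0$. Words: $\Omega_0=\{\emptyset\}$, $\Omega_k=\{\sigma_1\cdots\sigma_k:1\le\sigma_j\le n_j\}$, $\Omega=\bigcup_k\Omega_k$, with concatenation $\sigma*j$. Let $J\subset\mathbb{R}^n$ be a closed set of finite diameter with nonempty interior, $J_\emptyset=J$. Sets $J_\sigma$, $\sigma\in\Omega$, are such that for every $k\ge1$ and $\sigma\in\Omega_{k-1}$, $J_{\sigma*1},\dots,J_{\sigma*n_k}\subset J_\sigma$ are each geometrically similar to $J_\sigma$, have pairwise disjoint interiors, and satisfy $c_k(1-a_k)\le |J_{\sigma*j}|/|J_\sigma|\le c_k(1+a_k)$ ($|\cdot|$ = diameter). Then $E=\bigcap_{k\ge1}\bigcup_{\sigma\in\Omega_k}J_\sigma$ is a Cantor-like set, and $\mathcal{C}(J,\{c_k\},\{n_k\},\{a_k\})$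 denotes the class of all such sets. For $F\subset\mathbb{R}^n$, $N_r(A)$ is the smallest number of balls of radius $r$ covering $A$, and the lower spectrum is $\dim_L^\theta F=\sup\{s\ge0:\exists\, b,c>0\ \forall\,0<R<b,\ \forall x\in F,\ N_{R^{1/\theta}}(B(x,R)\cap F)\ge c(R/R^{1/\theta})^s\}$. *)

theory Defs
  imports "HOL-Analysis.Analysis"
begin

(* Omega_k: words sigma_1 ... sigma_k with 1 <= sigma_j <= n_j, encoded as lists;
   the j-th letter (1-based) is sigma ! (j-1). Concatenation sigma*j is sigma @ [j]. *)
definition words :: "(nat \<Rightarrow> nat) \<Rightarrow> nat \<Rightarrow> nat list set" where
  "words nk k = {\<sigma>. length \<sigma> = k \<and> (\<forall>i<k. 1 \<le> \<sigma> ! i \<and> \<sigma> ! i \<le> nk (Suc i))}"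

definition geom_similar :: "'a::euclidean_space set \<Rightarrow> 'a set \<Rightarrow> bool" where
  "geom_similar A B \<longleftrightarrow>
     (\<exists>r>0. \<exists>f::'a \<Rightarrow> 'a. (\<forall>x y. dist (f x) (f y) = r * dist x y) \<and> f ` A = B)"

(* E belongs to the class C(J,{c_k},{n_k},{a_k}) (sequences indexed from 1) *)
definition cantor_like_class ::
  "'a::euclidean_space set \<Rightarrow> (nat \<Rightarrow> real) \<Rightarrow> (nat \<Rightarrow> nat) \<Rightarrow> (nat \<Rightarrow> real) \<Rightarrow> 'a set set" where
  "cantor_like_class J c nk a =
    {E. \<exists>JS :: nat list \<Rightarrow> 'a set.
        JS [] = J \<and>
        (\<forall>k\<ge>1. \<forall>\<sigma>\<in>words nk (k - 1).
           (\<forall>j\<in>{1..nk k}.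
              JS (\<sigma> @ [j]) \<subseteq> JS \<sigma> \<and>
              geom_similar (JS \<sigma>) (JS (\<sigma> @ [j])) \<and>
              c k * (1 - a k) \<le> diameter (JS (\<sigma> @ [j])) / diameter (JS \<sigma>) \<and>
              diameter (JS (\<sigma> @ [j])) / diameter (JS \<sigma>) \<le> c k * (1 + a k)) \<and>
           (\<forall>j\<in>{1..nk k}. \<forall>j'\<in>{1..nk k}. j \<noteq> j' \<longrightarrow>
              interior (JS (\<sigma> @ [j])) \<inter> interior (JS (\<sigma> @ [j'])) = {})) \<and>
        E = (\<Inter>k\<in>{1..}. \<Union>\<sigma>\<in>words nk k. JS \<sigma>)}"

definition covering_number :: "real \<Rightarrow> 'a::metric_space set \<Rightarrow> nat" where
  "covering_number r A =
     (LEAST m. \<exists>C. finite C \<and> card C = m \<and> A \<subseteq> (\<Union>x\<in>C. cball x r))"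

definition lower_spectrum :: "real \<Rightarrow> 'a::metric_space set \<Rightarrow> ereal" where
  "lower_spectrum \<theta> F = Sup (ereal ` {s. s \<ge> 0 \<and>
     (\<exists>b>0. \<exists>C>0. \<forall>R. 0 < R \<and> R < b \<longrightarrow> (\<forall>x\<in>F.
        real (covering_number (R powr (1/\<theta>)) (cball x R \<inter> F))
          \<ge> C * (R / R powr (1/\<theta>)) powr s))})"

definition delta :: "(nat \<Rightarrow> real) \<Rightarrow> nat \<Rightarrow> real" where
  "delta c k = (\<Prod>i\<in>{1..k}. c i)"

definition l_index :: "(nat \<Rightarrow> real) \<Rightarrow> real \<Rightarrow> nat \<Rightarrow> nat" where
  "l_index c \<theta> k = (GREATEST l. l \<ge> 1 \<and> delta c l \<ge> delta c k powr (1/\<theta>))"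

end

theory Submission
  imports Defs
begin

lemma sim_surj:
  fixes f :: "'a::euclidean_space \<Rightarrow> 'a"
  assumes f: "\<forall>x y. dist (f x) (f y) = r * dist x y" and r: "r > 0"
  shows "surj f"
proof -
  define Q where "Q x = (1/r) *\<^sub>R (f x - f 0)" for x
  have "orthogonal_transformation Q"
    unfolding orthogonal_transformation_isometry
  proof (intro conjI allI)
    show "Q 0 = 0" by (simp add: Q_def)
    fix x y
    have "dist (Q x) (Q y) = (1/r) * norm (f x - f y)"
      using r by (simp add: Q_def dist_norm scaleR_diff_right[symmetric] abs_of_pos)
    also have "\<dots> = dist x y" using f r by (simp add: dist_norm[symmetric] abs_of_pos)
    finally show "dist (Q x) (Q y) = dist x y" .
  qed
  then have sQ: "surj Q" by (rule orthogonal_transformation_surj)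
  show ?thesis
  proof (rule surjI)
    fix y
    obtain z where "Q z = (1/r) *\<^sub>R (y - f 0)" using sQ by (metis surjD)
    then have "f z = y" using r by (simp add: Q_def)
    then show "f (inv f y) = y" by (metis f_inv_into_f rangeI)
  qed
qed

lemma sim_inj:
  fixes f :: "'a::metric_space \<Rightarrow> 'b::metric_space"
  assumes f: "\<forall>x y. dist (f x) (f y) = r * dist x y" and r: "r > 0"
  shows "inj f"
  by (rule injI) (metis f r dist_eq_0_iff mult_eq_0_iff less_irrefl)

lemma sim_ball:
  fixes f :: "'a::euclidean_space \<Rightarrow> 'a"
  assumes f: "\<forall>x y. dist (f x) (f y) = r * dist x y" and r: "r > 0"
  shows "f ` ball x e = ball (f x) (r * e)"
proof (intro equalityI subsetI)
  fix y assume "y \<in> f ` ball x e"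
  then show "y \<in> ball (f x) (r * e)" using f r by auto
next
  fix y assume y: "y \<in> ball (f x) (r * e)"
  obtain z where z: "y = f z" using sim_surj[OF f r] by (metis surjD)
  have "r * dist x z < r * e" using y f z by auto
  then have "dist x z < e" using r by simp
  then show "y \<in> f ` ball x e" using z by auto
qed

lemma sim_diameter:
  fixes f :: "'a::euclidean_space \<Rightarrow> 'a"
  assumes f: "\<forall>x y. dist (f x) (f y) = r * dist x y" and r: "r > 0" and A: "bounded A"
  shows "diameter (f ` A) = r * diameter A" "bounded (f ` A)"
proof -
  obtain z R where zR: "\<forall>x\<in>A. dist z x \<le> R" using A unfolding bounded_def by blast
  then have "\<forall>y\<in>f`A. dist (f z) y \<le> r * R" using f r by auto
  then show bB: "bounded (f ` A)" unfolding bounded_def by blast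
  have d0: "0 \<le> diameter A" by (simp add: diameter_ge_0 A)
  have "diameter (f ` A) \<le> r * diameter A"
  proof (rule diameter_le)
    show "f ` A \<noteq> {} \<or> 0 \<le> r * diameter A" using d0 r by simp
    fix u v assume "u \<in> f ` A" "v \<in> f ` A"
    then obtain x y where "x \<in> A" "y \<in> A" "u = f x" "v = f y" by blast
    then show "norm (u - v) \<le> r * diameter A"
      using f r diameter_bounded_bound[OF A, of x y] by (simp add: dist_norm[symmetric] mult_left_mono)
  qed
  moreover have "diameter A \<le> diameter (f ` A) / r"
  proof (rule diameter_le)
    show "A \<noteq> {} \<or> 0 \<le> diameter (f ` A) / r" using r diameter_ge_0[OF bB] by simp
    fix x y assume "x \<in> A" "y \<in> A"
    then have "dist (f x) (f y) \<le> diameter (f ` A)" by (intro diameter_bounded_bound[OF bB]) auto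
    then show "norm (x - y) \<le> diameter (f ` A) / r"
      using f r by (simp add: dist_norm[symmetric] pos_le_divide_eq mult.commute)
  qed
  then have "r * diameter A \<le> diameter (f ` A)" using r by (simp add: pos_le_divide_eq mult.commute)
  ultimately show "diameter (f ` A) = r * diameter A" by linarith
qed


lemma sim_cont:
  fixes f :: "'a::euclidean_space \<Rightarrow> 'a"
  assumes f: "\<forall>x y. dist (f x) (f y) = r * dist x y" and r: "r > 0"
  shows "continuous_on X f"
  by (rule lipschitz_on_continuous_on[of r]) (rule lipschitz_onI, use f r in auto)

definition pk :: "'a::euclidean_space set \<Rightarrow> nat \<Rightarrow> real \<Rightarrow> bool" where
  "pk A p s \<longleftrightarrow> (\<exists>S. finite S \<and> card S = p \<and> (\<forall>x\<in>S. ball x (s * diameter A) \<subseteq> A) \<and>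
     (\<forall>x\<in>S. \<forall>y\<in>S. x \<noteq> y \<longrightarrow> ball x (s * diameter A) \<inter> ball y (s * diameter A) = {}))"

lemma gs_props:
  fixes A B :: "'a::euclidean_space set"
  assumes "geom_similar A B" "bounded A"
  shows "\<exists>r>0. diameter B = r * diameter A \<and> bounded B \<and> (compact A \<longrightarrow> compact B)
           \<and> (A \<noteq> {} \<longrightarrow> B \<noteq> {}) \<and> (\<forall>p s. pk A p s \<longrightarrow> pk B p s)"
proof -
  obtain r f where r: "r > 0" and f: "\<forall>x y. dist (f x) (f y) = r * dist x y" and B: "f ` A = B"
    using assms(1) unfolding geom_similar_def by blast
  have dB: "diameter B = r * diameter A" and bB: "bounded B"
    using sim_diameter[OF f r assms(2)] B by auto
  have "compact A \<longrightarrow> compact B"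
    using compact_continuous_image[OF sim_cont[OF f r]] B by blast
  moreover have "\<forall>p s. pk A p s \<longrightarrow> pk B p s"
  proof (intro allI impI)
    fix p s assume "pk A p s"
    then obtain S where S: "finite S" "card S = p" "\<forall>x\<in>S. ball x (s * diameter A) \<subseteq> A"
      "\<forall>x\<in>S. \<forall>y\<in>S. x \<noteq> y \<longrightarrow> ball x (s * diameter A) \<inter> ball y (s * diameter A) = {}"
      unfolding pk_def by blast
    have inj: "inj f" by (rule sim_inj[OF f r])
    have bi: "ball (f x) (s * diameter B) = f ` ball x (s * diameter A)" for x
      using sim_ball[OF f r, of x "s * diameter A"] dB by (simp add: algebra_simps)
    show "pk B p s" unfolding pk_def
    proof (intro exI[of _ "f ` S"] conjI ballI impI)
      show "finite (f ` S)" using S by simp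
      show "card (f ` S) = p" using S card_image[OF inj_on_subset[OF inj]] by auto
      fix u assume "u \<in> f ` S"
      then obtain x where x: "x \<in> S" "u = f x" by blast
      have "ball x (s * diameter A) \<subseteq> A" using S x by blast
      then show "ball u (s * diameter B) \<subseteq> B" using bi[of x] x B by (metis image_mono)
      fix v assume "v \<in> f ` S" "u \<noteq> v"
      then obtain y where y: "y \<in> S" "v = f y" "x \<noteq> y" using x by blast
      have "f ` ball x (s * diameter A) \<inter> f ` ball y (s * diameter A) = {}"
        using S(4) x y image_Int[OF inj, symmetric] by auto
      then show "ball u (s * diameter B) \<inter> ball v (s * diameter B) = {}" using bi x y by simp
    qed
  qed
  ultimately show ?thesis using r dB bB B by blast
qed

lemma pk_mono:
  assumes "pk A p s" "0 \<le> s'" "s' \<le> s" "bounded A"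
  shows "pk A p s'"
proof -
  obtain S where S: "finite S" "card S = p" "\<forall>x\<in>S. ball x (s * diameter A) \<subseteq> A"
    "\<forall>x\<in>S. \<forall>y\<in>S. x \<noteq> y \<longrightarrow> ball x (s * diameter A) \<inter> ball y (s * diameter A) = {}"
    using assms(1) unfolding pk_def by blast
  have sub: "ball x (s' * diameter A) \<subseteq> ball x (s * diameter A)" for x
    using assms diameter_ge_0[OF assms(4)] by (intro subset_ball mult_right_mono) auto
  show ?thesis unfolding pk_def
    using S sub by (intro exI[of _ S]) blast
qed

lemma balls_bound:
  fixes x :: "'i \<Rightarrow> 'a::euclidean_space"
  assumes I: "finite I" and t: "t > 0" and R: "0 \<le> R"
    and sub: "\<forall>i\<in>I. ball (x i) t \<subseteq> cball z R"
    and dis: "\<forall>i\<in>I. \<forall>j\<in>I. i \<noteq> j \<longrightarrow> ball (x i) t \<inter> ball (x j) t = {}"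
  shows "real (card I) * t ^ DIM('a) \<le> R ^ DIM('a)"
proof -
  define w where "w = measure lborel (ball (0::'a) 1)"
  have w: "w > 0" unfolding w_def by (rule content_ball_pos) simp
  have fin: "emeasure lborel (ball (x i) t) \<noteq> \<infinity>" for i
    using emeasure_lborel_ball_finite[of "x i" t] by simp
  have "measure lborel (\<Union>i\<in>I. ball (x i) t) = (\<Sum>i\<in>I. measure lborel (ball (x i) t))"
  proof (rule measure_finite_Union[OF I])
    show "(\<lambda>i. ball (x i) t) ` I \<subseteq> sets lborel" by auto
    show "disjoint_family_on (\<lambda>i. ball (x i) t) I" unfolding disjoint_family_on_def
    proof (intro ballI impI)
      fix m n assume "m \<in> I" "n \<in> I" "m \<noteq> n"
      then show "ball (x m) t \<inter> ball (x n) t = {}" using dis by simp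
    qed
    show "\<And>i. i \<in> I \<Longrightarrow> emeasure lborel (ball (x i) t) \<noteq> \<infinity>" by (rule fin)
  qed
  also have "\<dots> = real (card I) * (t ^ DIM('a) * w)"
  proof -
    have "measure lborel (ball (x i) t) = t ^ DIM('a) * w" for i
      unfolding w_def by (rule content_ball_conv_unit_ball) (use t in simp)
    then show ?thesis by simp
  qed
  finally have eq: "measure lborel (\<Union>i\<in>I. ball (x i) t) = real (card I) * (t ^ DIM('a) * w)" .
  have "measure lborel (\<Union>i\<in>I. ball (x i) t) \<le> measure lborel (cball z R)"
  proof (rule measure_mono_fmeasurable)
    show "(\<Union>i\<in>I. ball (x i) t) \<subseteq> cball z R" using sub by (simp add: UN_subset_iff)
    show "(\<Union>i\<in>I. ball (x i) t) \<in> sets lborel" by (simp add: borel_open open_UN)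
    show "cball z R \<in> fmeasurable lborel" by (rule fmeasurable_compact) simp
  qed
  also have "\<dots> = R ^ DIM('a) * w"
    unfolding w_def content_cball_conv_ball by (rule content_ball_conv_unit_ball) (rule R)
  finally have "real (card I) * t ^ DIM('a) * w \<le> R ^ DIM('a) * w" using eq by (simp add: mult.assoc)
  then show ?thesis using w by simp
qed

lemma pk_bound:
  fixes A :: "'a::euclidean_space set"
  assumes "pk A p s" "s > 0" "diameter A > 0" "A \<subseteq> cball z R" "0 \<le> R"
  shows "real p * (s * diameter A) ^ DIM('a) \<le> R ^ DIM('a)"
proof -
  obtain S where S: "finite S" "card S = p" "\<forall>x\<in>S. ball x (s * diameter A) \<subseteq> A"
    "\<forall>x\<in>S. \<forall>y\<in>S. x \<noteq> y \<longrightarrow> ball x (s * diameter A) \<inter> ball y (s * diameter A) = {}"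
    using assms(1) unfolding pk_def by blast
  have "\<forall>i\<in>S. ball i (s * diameter A) \<subseteq> cball z R" using S(3) assms(4) by blast
  then show ?thesis
    using balls_bound[of S "s * diameter A" R "\<lambda>x. x" z] S assms by simp
qed


lemma pk_union:
  fixes A :: "'a::euclidean_space set" and B :: "nat \<Rightarrow> 'a set"
  assumes I: "finite I" and sub: "\<forall>j\<in>I. B j \<subseteq> A"
    and dis: "\<forall>i\<in>I. \<forall>j\<in>I. i \<noteq> j \<longrightarrow> interior (B i) \<inter> interior (B j) = {}"
    and pkB: "\<forall>j\<in>I. pk (B j) p s" and rd: "\<forall>j\<in>I. r * diameter A \<le> diameter (B j)"
    and r: "r > 0" and s: "s > 0" and dA: "diameter A > 0"
  shows "pk A (card I * p) (s * r)"
proof -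
  define \<rho> where "\<rho> = s * r * diameter A"
  have \<rho>: "\<rho> > 0" using r s dA by (simp add: \<rho>_def)
  have "\<forall>j\<in>I. \<exists>S. finite S \<and> card S = p \<and> (\<forall>x\<in>S. ball x (s * diameter (B j)) \<subseteq> B j) \<and>
     (\<forall>x\<in>S. \<forall>y\<in>S. x \<noteq> y \<longrightarrow> ball x (s * diameter (B j)) \<inter> ball y (s * diameter (B j)) = {})"
    using pkB unfolding pk_def by blast
  then obtain S where S: "\<And>j. j \<in> I \<Longrightarrow> finite (S j) \<and> card (S j) = p \<and>
     (\<forall>x\<in>S j. ball x (s * diameter (B j)) \<subseteq> B j) \<and>
     (\<forall>x\<in>S j. \<forall>y\<in>S j. x \<noteq> y \<longrightarrow> ball x (s * diameter (B j)) \<inter> ball y (s * diameter (B j)) = {})"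
    by metis
  have sb: "ball x \<rho> \<subseteq> ball x (s * diameter (B j))" if "j \<in> I" for j x
    using rd that s by (intro subset_ball) (simp add: \<rho>_def mult.assoc mult_left_mono)
  have inB: "ball x \<rho> \<subseteq> interior (B j)" if "j \<in> I" "x \<in> S j" for j x
    using sb[OF that(1), of x] S[OF that(1)] that(2) by (intro interior_maximal) auto
  have Sdis: "S i \<inter> S j = {}" if "i \<in> I" "j \<in> I" "i \<noteq> j" for i j
  proof (rule ccontr)
    assume "S i \<inter> S j \<noteq> {}"
    then obtain x where "x \<in> S i" "x \<in> S j" by blast
    then have "x \<in> interior (B i) \<inter> interior (B j)"
      using inB[OF that(1)] inB[OF that(2)] \<rho> by fastforce
    then show False using dis that by blast
  qed
  define T where "T = (\<Union>j\<in>I. S j)"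
  have fT: "finite T" using I S by (simp add: T_def)
  have cT: "card T = card I * p"
    unfolding T_def using I S Sdis by (subst card_UN_disjoint) auto
  show ?thesis unfolding pk_def
  proof (intro exI[of _ T] conjI ballI impI)
    show "finite T" "card T = card I * p" by (fact fT, fact cT)
    fix x assume "x \<in> T"
    then obtain i where i: "i \<in> I" "x \<in> S i" by (auto simp: T_def)
    show "ball x (s * r * diameter A) \<subseteq> A"
      using inB[OF i] interior_subset[of "B i"] sub i by (auto simp: \<rho>_def)
    fix y assume "y \<in> T" "x \<noteq> y"
    then obtain j where j: "j \<in> I" "y \<in> S j" by (auto simp: T_def)
    show "ball x (s * r * diameter A) \<inter> ball y (s * r * diameter A) = {}"
    proof (cases "i = j")
      case True
      then have "ball x (s * diameter (B i)) \<inter> ball y (s * diameter (B i)) = {}"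
        using S[OF i(1)] i j \<open>x \<noteq> y\<close> by blast
      then show ?thesis using sb[OF i(1), of x] sb[OF i(1), of y] by (auto simp: \<rho>_def)
    next
      case False
      have "ball x \<rho> \<inter> ball y \<rho> \<subseteq> interior (B i) \<inter> interior (B j)" using inB[OF i] inB[OF j] by blast
      moreover have "interior (B i) \<inter> interior (B j) = {}" using dis i j False by blast
      ultimately show ?thesis unfolding \<rho>_def by blast
    qed
  qed
qed

lemma words_0: "words nk 0 = {[]}"
  by (auto simp: words_def)

lemma words_Suc:
  "\<sigma> \<in> words nk (Suc k) \<longleftrightarrow> (\<exists>\<tau> j. \<sigma> = \<tau> @ [j] \<and> \<tau> \<in> words nk k \<and> j \<in> {1..nk (Suc k)})"
proof
  assume s: "\<sigma> \<in> words nk (Suc k)"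
  then have "\<sigma> \<noteq> []" by (auto simp: words_def)
  then have e: "\<sigma> = butlast \<sigma> @ [last \<sigma>]" by simp
  have l: "length (butlast \<sigma>) = k" using s by (simp add: words_def)
  have "\<forall>i<k. 1 \<le> butlast \<sigma> ! i \<and> butlast \<sigma> ! i \<le> nk (Suc i)"
    using s l by (auto simp: words_def nth_butlast)
  then have "butlast \<sigma> \<in> words nk k" using l by (simp add: words_def)
  moreover have "last \<sigma> \<in> {1..nk (Suc k)}"
    using s \<open>\<sigma> \<noteq> []\<close> by (auto simp: words_def last_conv_nth)
  ultimately show "\<exists>\<tau> j. \<sigma> = \<tau> @ [j] \<and> \<tau> \<in> words nk k \<and> j \<in> {1..nk (Suc k)}" using e by blast
next
  assume "\<exists>\<tau> j. \<sigma> = \<tau> @ [j] \<and> \<tau> \<in> words nk k \<and> j \<in> {1..nk (Suc k)}"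
  then obtain \<tau> j where "\<sigma> = \<tau> @ [j]" "\<tau> \<in> words nk k" "j \<in> {1..nk (Suc k)}" by blast
  then show "\<sigma> \<in> words nk (Suc k)"
    by (auto simp: words_def nth_append less_Suc_eq)
qed

lemma words_Suc_eq:
  "words nk (Suc k) = (\<lambda>(\<tau>, j). \<tau> @ [j]) ` (words nk k \<times> {1..nk (Suc k)})"
  using words_Suc[of _ nk k] by (auto simp: image_iff)

lemma words_finite: "finite (words nk k)"
  by (induction k) (simp_all add: words_0 words_Suc_eq)

lemma words_length: "\<sigma> \<in> words nk k \<Longrightarrow> length \<sigma> = k"
  by (simp add: words_def)

lemma words_take: "\<sigma> \<in> words nk k \<Longrightarrow> m \<le> k \<Longrightarrow> take m \<sigma> \<in> words nk m"
  by (auto simp: words_def)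

lemma words_rep:
  assumes "\<sigma> \<in> words nk k" "\<forall>i\<ge>1. nk i \<ge> 2"
  shows "\<sigma> @ replicate m 1 \<in> words nk (k + m)"
  using assms
  by (auto simp: words_def nth_append)
     (metis Suc_le_eq le_add1 less_imp_le_nat numeral_2_eq_2 order_trans zero_less_Suc le_Suc_eq One_nat_def)

lemma words_ne: "\<forall>i\<ge>1. nk i \<ge> 2 \<Longrightarrow> words nk k \<noteq> {}"
  using words_rep[of "[]" nk 0 k] by (auto simp: words_0)

lemma ext_card:
  assumes "\<sigma> \<in> words nk k"
  shows "card {\<tau> \<in> words nk (k + m). take k \<tau> = \<sigma>} = (\<Prod>i\<in>{k+1..k+m}. nk i)"
proof (induction m)
  case 0
  have "{\<tau> \<in> words nk (k + 0). take k \<tau> = \<sigma>} = {\<sigma>}"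
    using assms by (auto simp: words_def)
  then show ?case by simp
next
  case (Suc m)
  let ?X = "{\<tau> \<in> words nk (k + m). take k \<tau> = \<sigma>}"
  have eq: "{\<tau> \<in> words nk (k + Suc m). take k \<tau> = \<sigma>} = (\<lambda>(\<tau>, j). \<tau> @ [j]) ` (?X \<times> {1..nk (Suc (k+m))})"
  proof (intro equalityI subsetI)
    fix \<tau> assume "\<tau> \<in> {\<tau> \<in> words nk (k + Suc m). take k \<tau> = \<sigma>}"
    then obtain \<tau>' j where "\<tau> = \<tau>' @ [j]" "\<tau>' \<in> words nk (k+m)" "j \<in> {1..nk (Suc (k+m))}" "take k \<tau> = \<sigma>"
      using words_Suc[of \<tau> nk "k+m"] by auto
    moreover have "length \<tau>' = k + m" using \<open>\<tau>' \<in> words nk (k+m)\<close> by (simp add: words_def)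
    ultimately show "\<tau> \<in> (\<lambda>(\<tau>, j). \<tau> @ [j]) ` (?X \<times> {1..nk (Suc (k+m))})"
      by (auto simp: image_iff)
  next
    fix \<tau> assume "\<tau> \<in> (\<lambda>(\<tau>, j). \<tau> @ [j]) ` (?X \<times> {1..nk (Suc (k+m))})"
    then obtain \<tau>' j where t: "\<tau> = \<tau>' @ [j]" "\<tau>' \<in> ?X" "j \<in> {1..nk (Suc (k+m))}" by auto
    then have "length \<tau>' = k + m" by (simp add: words_def)
    then show "\<tau> \<in> {\<tau> \<in> words nk (k + Suc m). take k \<tau> = \<sigma>}"
      using t words_Suc[of \<tau> nk "k+m"] by auto
  qed
  have inj: "inj_on (\<lambda>(\<tau>, j). \<tau> @ [j]) (?X \<times> {1..nk (Suc (k+m))})"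
    by (auto simp: inj_on_def)
  have fX: "finite ?X" using words_finite[of nk "k+m"] by simp
  have "card {\<tau> \<in> words nk (k + Suc m). take k \<tau> = \<sigma>} = card ?X * nk (Suc (k+m))"
    unfolding eq using card_image[OF inj] fX by (simp add: card_cartesian_product)
  also have "\<dots> = (\<Prod>i\<in>{k+1..k+Suc m}. nk i)"
    using Suc.IH by (simp add: prod.nat_ivl_Suc')
  finally show ?case .
qed


lemma cov_le:
  assumes "finite C" "X \<subseteq> (\<Union>x\<in>C. cball x r)"
  shows "covering_number r X \<le> card C"
  unfolding covering_number_def using assms by (intro Least_le) blast

lemma cov_ex:
  assumes "finite C" "X \<subseteq> (\<Union>x\<in>C. cball x r)"
  shows "\<exists>C'. finite C' \<and> card C' = covering_number r X \<and> X \<subseteq> (\<Union>x\<in>C'. cball x r)"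
proof -
  have "\<exists>m C. finite C \<and> card C = m \<and> X \<subseteq> (\<Union>x\<in>C. cball x r)" using assms by blast
  then have "\<exists>C. finite C \<and> card C = (LEAST m. \<exists>C. finite C \<and> card C = m \<and> X \<subseteq> (\<Union>x\<in>C. cball x r))
       \<and> X \<subseteq> (\<Union>x\<in>C. cball x r)"
    by (rule LeastI_ex[where P = "\<lambda>m. \<exists>C. finite C \<and> card C = m \<and> X \<subseteq> (\<Union>x\<in>C. cball x r)"]) 
  then show ?thesis unfolding covering_number_def .
qed

locale cantor =
  fixes J :: "'a::euclidean_space set" and c a :: "nat \<Rightarrow> real" and nk :: "nat \<Rightarrow> nat"
    and JS :: "nat list \<Rightarrow> 'a set" and E :: "'a set" and \<eta> :: real
  assumes a_pos: "\<forall>k\<ge>1. a k > 0" and a_sum: "summable a"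
    and nk_ge: "\<forall>k\<ge>1. nk k \<ge> 2"
    and c_bounds: "\<forall>k\<ge>1. 0 < c k \<and> c k < 1"
    and eta: "\<eta> > 0" "\<forall>k\<ge>1. c k \<ge> \<eta>"
    and J_compact: "compact J" and J_int: "interior J \<noteq> {}"
    and JS0: "JS [] = J"
    and child: "\<And>k \<sigma> j. \<sigma> \<in> words nk k \<Longrightarrow> j \<in> {1..nk (Suc k)} \<Longrightarrow>
        JS (\<sigma> @ [j]) \<subseteq> JS \<sigma> \<and> geom_similar (JS \<sigma>) (JS (\<sigma> @ [j])) \<and>
        c (Suc k) * (1 - a (Suc k)) \<le> diameter (JS (\<sigma> @ [j])) / diameter (JS \<sigma>) \<and>
        diameter (JS (\<sigma> @ [j])) / diameter (JS \<sigma>) \<le> c (Suc k) * (1 + a (Suc k))"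
    and child_dis: "\<And>k \<sigma> j j'. \<sigma> \<in> words nk k \<Longrightarrow> j \<in> {1..nk (Suc k)} \<Longrightarrow> j' \<in> {1..nk (Suc k)} \<Longrightarrow>
        j \<noteq> j' \<Longrightarrow> interior (JS (\<sigma> @ [j])) \<inter> interior (JS (\<sigma> @ [j'])) = {}"
    and E_def: "E = (\<Inter>k\<in>{1..}. \<Union>\<sigma>\<in>words nk k. JS \<sigma>)"
begin

lemma J_ball: "\<exists>z e. e > 0 \<and> ball z e \<subseteq> J"
proof -
  obtain z where "z \<in> interior J" using J_int by blast
  then obtain e where "e > 0" "ball z e \<subseteq> interior J" using open_interior open_contains_ball by blast
  then show ?thesis using interior_subset by blast
qed

lemma J_diam: "diameter J > 0"
proof -
  obtain z e where ze: "e > 0" "ball z e \<subseteq> J" using J_ball by blast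
  obtain b :: 'a where b: "b \<in> Basis" using nonempty_Basis by blast
  define y where "y = z + (e/2) *\<^sub>R b"
  have "dist z y = e/2" using b ze by (simp add: y_def dist_norm)
  then have "y \<in> J" "z \<in> J" using ze by auto
  then have "dist z y \<le> diameter J"
    using diameter_bounded_bound[OF compact_imp_bounded[OF J_compact]] by blast
  then show ?thesis using \<open>dist z y = e/2\<close> ze by simp
qed

lemma struct: "\<exists>s0>0. \<forall>k \<sigma>. \<sigma> \<in> words nk k \<longrightarrow>
   (JS \<sigma> \<subseteq> J \<and> compact (JS \<sigma>) \<and> JS \<sigma> \<noteq> {} \<and> diameter (JS \<sigma>) > 0 \<and> pk (JS \<sigma>) 1 s0)"
proof -
  obtain z e where ze: "e > 0" "ball z e \<subseteq> J" using J_ball by blast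
  define s0 where "s0 = e / diameter J"
  have s0: "s0 > 0" using ze J_diam by (simp add: s0_def)
  have pkJ: "pk J 1 s0" unfolding pk_def
    using ze J_diam by (intro exI[of _ "{z}"]) (simp add: s0_def)
  have "\<sigma> \<in> words nk k \<longrightarrow>
   (JS \<sigma> \<subseteq> J \<and> compact (JS \<sigma>) \<and> JS \<sigma> \<noteq> {} \<and> diameter (JS \<sigma>) > 0 \<and> pk (JS \<sigma>) 1 s0)" for k \<sigma>
  proof (induction k arbitrary: \<sigma>)
    case 0
    show ?case using J_compact J_diam pkJ ze JS0 by (auto simp: words_0)
  next
    case (Suc k)
    show ?case
    proof
      assume "\<sigma> \<in> words nk (Suc k)"
      then obtain \<tau> j where t: "\<sigma> = \<tau> @ [j]" "\<tau> \<in> words nk k" "j \<in> {1..nk (Suc k)}"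
        using words_Suc by blast
      have IH: "JS \<tau> \<subseteq> J" "compact (JS \<tau>)" "JS \<tau> \<noteq> {}" "diameter (JS \<tau>) > 0" "pk (JS \<tau>) 1 s0"
        using Suc t by auto
      have ch: "JS \<sigma> \<subseteq> JS \<tau>" "geom_similar (JS \<tau>) (JS \<sigma>)" using child[OF t(2,3)] t(1) by auto
      obtain r where "r > 0" "diameter (JS \<sigma>) = r * diameter (JS \<tau>)" "compact (JS \<sigma>)"
          "JS \<sigma> \<noteq> {}" "pk (JS \<sigma>) 1 s0"
        using gs_props[OF ch(2) compact_imp_bounded[OF IH(2)]] IH by blast
      then show "JS \<sigma> \<subseteq> J \<and> compact (JS \<sigma>) \<and> JS \<sigma> \<noteq> {} \<and> diameter (JS \<sigma>) > 0 \<and> pk (JS \<sigma>) 1 s0"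
        using IH ch by auto
    qed
  qed
  then show ?thesis using s0 by blast
qed

lemma nested: "\<sigma> \<in> words nk l \<Longrightarrow> m \<le> l \<Longrightarrow> JS \<sigma> \<subseteq> JS (take m \<sigma>)"
proof (induction l arbitrary: \<sigma> m)
  case 0
  then show ?case by (simp add: words_0)
next
  case (Suc l)
  then obtain \<tau> j where t: "\<sigma> = \<tau> @ [j]" "\<tau> \<in> words nk l" "j \<in> {1..nk (Suc l)}"
    using words_Suc by blast
  have lt: "length \<tau> = l" using t(2) by (rule words_length)
  show ?case
  proof (cases "m = Suc l")
    case True
    then show ?thesis using t lt by simp
  next
    case False
    then have "m \<le> l" using Suc by simp
    then have "take m \<sigma> = take m \<tau>" using t lt by simp
    then show ?thesis using Suc.IH[OF t(2) \<open>m \<le> l\<close>] child[OF t(2,3)] t(1) by auto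
  qed
qed

lemma int_dis: "\<sigma> \<in> words nk k \<Longrightarrow> \<tau> \<in> words nk k \<Longrightarrow> \<sigma> \<noteq> \<tau> \<Longrightarrow>
   interior (JS \<sigma>) \<inter> interior (JS \<tau>) = {}"
proof (induction k arbitrary: \<sigma> \<tau>)
  case 0
  then show ?case by (simp add: words_0)
next
  case (Suc k)
  obtain \<sigma>' i where s: "\<sigma> = \<sigma>' @ [i]" "\<sigma>' \<in> words nk k" "i \<in> {1..nk (Suc k)}"
    using Suc.prems words_Suc by blast
  obtain \<tau>' j where t: "\<tau> = \<tau>' @ [j]" "\<tau>' \<in> words nk k" "j \<in> {1..nk (Suc k)}"
    using Suc.prems words_Suc by blast
  show ?case
  proof (cases "\<sigma>' = \<tau>'")
    case True
    then have "i \<noteq> j" using s t Suc.prems by auto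
    then show ?thesis using child_dis[OF s(2) s(3)] t(3) s(1) t(1) True by auto
  next
    case False
    have "interior (JS \<sigma>') \<inter> interior (JS \<tau>') = {}" using Suc.IH[OF s(2) t(2) False] .
    moreover have "interior (JS \<sigma>) \<subseteq> interior (JS \<sigma>')" "interior (JS \<tau>) \<subseteq> interior (JS \<tau>')"
      using child[OF s(2,3)] child[OF t(2,3)] s(1) t(1) by (simp_all add: interior_mono)
    ultimately show ?thesis by blast
  qed
qed

lemma E_sub: "E \<subseteq> (\<Union>\<sigma>\<in>words nk k. JS \<sigma>)"
proof (cases "k = 0")
  case True
  have "E \<subseteq> (\<Union>\<sigma>\<in>words nk 1. JS \<sigma>)" unfolding E_def by auto
  also have "\<dots> \<subseteq> JS []"
    using nested[of _ 1 0] by auto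
  finally show ?thesis using True by (simp add: words_0)
next
  case False
  then show ?thesis unfolding E_def by auto
qed

lemma E_pt: "\<sigma> \<in> words nk k \<Longrightarrow> \<exists>y\<in>E. y \<in> JS \<sigma>"
proof -
  assume s: "\<sigma> \<in> words nk k"
  obtain s0 where st: "\<forall>k \<sigma>. \<sigma> \<in> words nk k \<longrightarrow>
   (JS \<sigma> \<subseteq> J \<and> compact (JS \<sigma>) \<and> JS \<sigma> \<noteq> {} \<and> diameter (JS \<sigma>) > 0 \<and> pk (JS \<sigma>) 1 s0)"
    using struct by blast
  define F where "F m = JS (\<sigma> @ replicate m 1)" for m
  have w: "\<sigma> @ replicate m 1 \<in> words nk (k + m)" for m using words_rep[OF s nk_ge] .
  have ls: "length \<sigma> = k" using s by (rule words_length)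
  have "\<Inter>(range F) \<noteq> {}"
  proof (rule compact_nest)
    show "compact (F m)" "F m \<noteq> {}" for m using st w unfolding F_def by blast+
    fix m m' :: nat assume "m \<le> m'"
    then have "take (k + m) (\<sigma> @ replicate m' 1) = \<sigma> @ replicate m 1"
      using ls by (simp add: take_replicate)
    then show "F m' \<subseteq> F m" using nested[OF w[of m'], of "k+m"] \<open>m \<le> m'\<close> unfolding F_def by simp
  qed
  then obtain y where y: "\<And>m. y \<in> F m" by blast
  have "\<exists>\<sigma>'\<in>words nk k'. y \<in> JS \<sigma>'" if "1 \<le> k'" for k'
  proof -
    show "\<exists>\<sigma>'\<in>words nk k'. y \<in> JS \<sigma>'"
    proof (cases "k \<le> k'")
      case True
      then show ?thesis using w[of "k' - k"] y[of "k' - k"] unfolding F_def by (intro bexI) auto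
    next
      case False
      have "y \<in> JS \<sigma>" using y[of 0] unfolding F_def by simp
      then have "y \<in> JS (take k' \<sigma>)" using nested[OF s, of k'] False by auto
      then show ?thesis using words_take[OF s, of k'] False by auto
    qed
  qed
  then have "y \<in> E" unfolding E_def by blast
  moreover have "y \<in> JS \<sigma>" using y[of 0] unfolding F_def by simp
  ultimately show ?thesis by blast
qed


lemma delta_0: "delta c 0 = 1" by (simp add: delta_def)

lemma delta_Suc: "delta c (Suc k) = delta c k * c (Suc k)"
  unfolding delta_def by (simp add: prod.nat_ivl_Suc' mult.commute)

lemma delta_pos: "delta c k > 0"
  by (induction k) (use c_bounds in \<open>simp_all add: delta_0 delta_Suc\<close>)

lemma delta_Suc_le: "delta c (Suc k) \<le> delta c k"
proof -
  have "c (Suc k) \<le> 1" using c_bounds by (simp add: less_imp_le)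
  then show ?thesis using delta_pos[of k] by (simp add: delta_Suc mult_left_le)
qed

lemma delta_Suc_ge: "delta c (Suc k) \<ge> \<eta> * delta c k"
  using delta_pos[of k] eta by (simp add: delta_Suc mult.commute mult_right_mono)

lemma delta_mono: "m \<le> k \<Longrightarrow> delta c k \<le> delta c m"
  by (induction k rule: dec_induct) (use delta_Suc_le order_trans in blast)+

lemma delta_le1: "delta c k \<le> 1"
  using delta_mono[of 0 k] by (simp add: delta_0)

lemma ratio:
  assumes "\<sigma> \<in> words nk k" "j \<in> {1..nk (Suc k)}" "diameter (JS \<sigma>) > 0"
  shows "c (Suc k) * (1 - a (Suc k)) * diameter (JS \<sigma>) \<le> diameter (JS (\<sigma> @ [j]))"
    "diameter (JS (\<sigma> @ [j])) \<le> c (Suc k) * (1 + a (Suc k)) * diameter (JS \<sigma>)"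
  using child[OF assms(1,2)] assms(3) by (simp_all add: pos_le_divide_eq pos_divide_le_eq)

lemma meas:
  assumes "a (Suc k) < 1"
  shows "real (nk (Suc k)) * (c (Suc k) * (1 - a (Suc k))) ^ DIM('a) \<le> 1"
proof (rule ccontr)
  define N where "N = nk (Suc k)"
  define r where "r = c (Suc k) * (1 - a (Suc k))"
  assume "\<not> real (nk (Suc k)) * (c (Suc k) * (1 - a (Suc k))) ^ DIM('a) \<le> 1"
  then have big: "real N * r ^ DIM('a) > 1" by (simp add: N_def r_def)
  have r: "r > 0" using assms c_bounds by (simp add: r_def)
  obtain s0 where s0: "s0 > 0" and st: "\<forall>k \<sigma>. \<sigma> \<in> words nk k \<longrightarrow>
   (JS \<sigma> \<subseteq> J \<and> compact (JS \<sigma>) \<and> JS \<sigma> \<noteq> {} \<and> diameter (JS \<sigma>) > 0 \<and> pk (JS \<sigma>) 1 s0)"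
    using struct by blast
  define \<sigma> where "\<sigma> = replicate k (1::nat)"
  have \<sigma>: "\<sigma> \<in> words nk k" using words_rep[of "[]" nk 0 k] nk_ge by (simp add: words_0 \<sigma>_def)
  have st\<sigma>: "compact (JS \<sigma>)" "JS \<sigma> \<noteq> {}" "diameter (JS \<sigma>) > 0" "pk (JS \<sigma>) 1 s0" using st \<sigma> by auto
  have ch: "\<And>j. j \<in> {1..N} \<Longrightarrow> JS (\<sigma> @ [j]) \<subseteq> JS \<sigma> \<and> geom_similar (JS \<sigma>) (JS (\<sigma> @ [j]))"
    using child[OF \<sigma>] by (simp add: N_def)
  have pkm: "pk (JS \<sigma>) (N ^ m) (s0 * r ^ m)" for m
  proof (induction m)
    case 0
    then show ?case using st\<sigma> by simp
  next
    case (Suc m)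
    have "pk (JS \<sigma>) (card {1..N} * N ^ m) (s0 * r ^ m * r)"
    proof (rule pk_union)
      show "finite {1..N}" by simp
      show "\<forall>j\<in>{1..N}. JS (\<sigma> @ [j]) \<subseteq> JS \<sigma>" using ch by blast
      show "\<forall>i\<in>{1..N}. \<forall>j\<in>{1..N}. i \<noteq> j \<longrightarrow> interior (JS (\<sigma> @ [i])) \<inter> interior (JS (\<sigma> @ [j])) = {}"
        using child_dis[OF \<sigma>] by (simp add: N_def)
      show "\<forall>j\<in>{1..N}. pk (JS (\<sigma> @ [j])) (N ^ m) (s0 * r ^ m)"
        using gs_props[OF _ compact_imp_bounded[OF st\<sigma>(1)]] ch Suc.IH by blast
      show "\<forall>j\<in>{1..N}. r * diameter (JS \<sigma>) \<le> diameter (JS (\<sigma> @ [j]))"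
        using ratio(1)[OF \<sigma> _ st\<sigma>(3)] by (simp add: N_def r_def)
      show "r > 0" "s0 * r ^ m > 0" "diameter (JS \<sigma>) > 0" using r s0 st\<sigma> by auto
    qed
    then show ?case by (simp add: ac_simps)
  qed
  obtain y where y: "y \<in> JS \<sigma>" using st\<sigma> by blast
  have sub: "JS \<sigma> \<subseteq> cball y (diameter (JS \<sigma>))"
    using diameter_bounded_bound[OF compact_imp_bounded[OF st\<sigma>(1)] y] by (auto simp: subset_iff)
  have bd: "(real N * r ^ DIM('a)) ^ m \<le> 1 / s0 ^ DIM('a)" for m
  proof -
    have "real (N ^ m) * (s0 * r ^ m * diameter (JS \<sigma>)) ^ DIM('a) \<le> diameter (JS \<sigma>) ^ DIM('a)"
      using pk_bound[OF pkm[of m] _ st\<sigma>(3) sub] r s0 st\<sigma>(3) by simp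
    then have "(real N * r ^ DIM('a)) ^ m * s0 ^ DIM('a) * diameter (JS \<sigma>) ^ DIM('a) \<le> 1 * diameter (JS \<sigma>) ^ DIM('a)"
      by (simp add: power_mult_distrib power_mult[symmetric] mult.commute mult.left_commute mult.assoc power_commutes)
    then have "(real N * r ^ DIM('a)) ^ m * s0 ^ DIM('a) \<le> 1"
      using st\<sigma>(3) by (simp add: mult_le_cancel_right)
    then show ?thesis using s0 by (simp add: pos_le_divide_eq)
  qed
  obtain m where "1 / s0 ^ DIM('a) < (real N * r ^ DIM('a)) ^ m" using real_arch_pow[OF big] by blast
  then show False using bd[of m] by simp
qed


lemma eventual:
  "\<exists>K1\<ge>1. \<forall>k\<ge>K1. a k \<le> 1/2 \<and> 0 \<le> a k \<and> (1 - a k) ^ DIM('a) \<ge> 3/4 \<and> c k ^ DIM('a) \<le> 2/3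
      \<and> real (nk k) \<le> 4 / (3 * \<eta> ^ DIM('a))"
proof -
  define n where "n = DIM('a)"
  have n: "n \<ge> 1" by (simp add: n_def DIM_positive Suc_leI)
  have "a \<longlonglongrightarrow> 0" by (rule summable_LIMSEQ_zero[OF a_sum])
  then have "eventually (\<lambda>k. a k < 1 / (4 * real n)) sequentially"
    using n by (intro order_tendstoD(2)) auto
  then obtain N where N: "\<forall>k\<ge>N. a k < 1 / (4 * real n)" unfolding eventually_sequentially by blast
  define K1 where "K1 = max 1 N"
  have "\<forall>k\<ge>K1. a k \<le> 1/2 \<and> 0 \<le> a k \<and> (1 - a k) ^ n \<ge> 3/4 \<and> c k ^ n \<le> 2/3
      \<and> real (nk k) \<le> 4 / (3 * \<eta> ^ n)"
  proof (intro allI impI)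
    fix k assume k: "K1 \<le> k"
    then have k1: "k \<ge> 1" and akN: "a k < 1 / (4 * real n)" using N by (auto simp: K1_def)
    have a0: "a k > 0" using a_pos k1 by simp
    have "1 / (4 * real n) \<le> 1/4" using n by (simp add: field_simps)
    then have a4: "a k \<le> 1/4" using akN by simp
    have "real n * a k \<le> 1/4" using akN n by (simp add: field_simps)
    moreover have "1 + real n * (- a k) \<le> (1 + (- a k)) ^ n"
      by (rule Bernoulli_inequality) (use a4 in simp)
    ultimately have b: "(1 - a k) ^ n \<ge> 3/4" by simp
    obtain k' where kk: "k = Suc k'" using k1 by (cases k) auto
    have ck: "0 < c k" "c k < 1" "\<eta> \<le> c k" using c_bounds eta k1 by auto
    have m: "real (nk k) * (c k * (1 - a k)) ^ n \<le> 1"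
      using meas[of k'] a4 kk by (simp add: n_def)
    have nk2: "real (nk k) \<ge> 2" using nk_ge k1 by simp
    have pos: "(c k * (1 - a k)) ^ n \<ge> 0" using ck a4 by simp
    have "2 * (c k * (1 - a k)) ^ n \<le> 1" using m nk2 pos by (meson mult_right_mono order_trans)
    then have "c k ^ n * (1 - a k) ^ n \<le> 1/2" by (simp add: power_mult_distrib)
    moreover have "c k ^ n * (3/4) \<le> c k ^ n * (1 - a k) ^ n"
      using b ck by (simp add: mult_left_mono)
    ultimately have c23: "c k ^ n \<le> 2/3" by simp
    have "\<eta> ^ n * (3/4) \<le> (c k * (1 - a k)) ^ n"
      unfolding power_mult_distrib using b ck eta
      by (intro mult_mono power_mono) auto
    then have "real (nk k) * (\<eta> ^ n * (3/4)) \<le> 1"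
      using m by (meson mult_left_mono of_nat_0_le_iff order_trans)
    then have "real (nk k) \<le> 4 / (3 * \<eta> ^ n)"
      using eta by (simp add: field_simps)
    then show "a k \<le> 1/2 \<and> 0 \<le> a k \<and> (1 - a k) ^ n \<ge> 3/4 \<and> c k ^ n \<le> 2/3
      \<and> real (nk k) \<le> 4 / (3 * \<eta> ^ n)" using a4 a0 b c23 by simp
  qed
  moreover have "K1 \<ge> 1" by (simp add: K1_def)
  ultimately show ?thesis unfolding n_def by blast
qed


lemma delta_decay:
  assumes "\<forall>k\<ge>K1. c k ^ DIM('a) \<le> 2/3" "K \<ge> K1"
  shows "delta c (K + j) ^ DIM('a) \<le> (2/3) ^ j * delta c K ^ DIM('a)"
proof (induction j)
  case 0 then show ?case by simp
next
  case (Suc j)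
  have "delta c (K + Suc j) ^ DIM('a) = delta c (K + j) ^ DIM('a) * c (Suc (K + j)) ^ DIM('a)"
    by (simp add: delta_Suc power_mult_distrib)
  also have "\<dots> \<le> ((2/3) ^ j * delta c K ^ DIM('a)) * (2/3)"
    using Suc.IH assms c_bounds by (intro mult_mono) (auto simp: delta_pos less_imp_le)
  finally show ?case by (simp add: ac_simps)
qed

lemma delta_small: "\<epsilon> > 0 \<Longrightarrow> \<exists>k. delta c k < \<epsilon>"
proof -
  assume e: "\<epsilon> > 0"
  obtain K1 where K1: "\<forall>k\<ge>K1. c k ^ DIM('a) \<le> 2/3" using eventual by blast
  obtain j where j: "(2/3::real) ^ j < \<epsilon> ^ DIM('a)" using real_arch_pow_inv[of "\<epsilon> ^ DIM('a)" "2/3"] e by auto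
  have "delta c (K1 + j) ^ DIM('a) \<le> (2/3) ^ j * delta c K1 ^ DIM('a)" using delta_decay[OF K1] by simp
  also have "\<dots> \<le> (2/3) ^ j * 1" using delta_le1[of K1] delta_pos[of K1]
    by (intro mult_left_mono) (auto simp: power_le_one)
  finally have "delta c (K1 + j) ^ DIM('a) < \<epsilon> ^ DIM('a)" using j by simp
  then have "delta c (K1 + j) < \<epsilon>" using e by (meson less_imp_le power_less_imp_less_base)
  then show ?thesis by blast
qed

definition S where "S = suminf (\<lambda>i. if i = 0 then 0 else a i)"

lemma sumS: "finite F \<Longrightarrow> F \<subseteq> {1..} \<Longrightarrow> sum a F \<le> S" "S \<ge> 0"
proof -
  define a' where "a' = (\<lambda>i::nat. if i = 0 then 0 else a i)"
  have nn: "a' i \<ge> 0" for i using a_pos by (simp add: a'_def less_imp_le)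
  have sa: "summable a'"
    using a_sum by (subst summable_cong[where g = a]) (auto simp: a'_def eventually_sequentially intro: exI[of _ 1])
  show "S \<ge> 0" unfolding S_def a'_def[symmetric] using sa nn by (simp add: suminf_nonneg)
  assume F: "finite F" "F \<subseteq> {1..}"
  have "sum a F = sum a' F" using F by (intro sum.cong) (auto simp: a'_def)
  also have "\<dots> \<le> suminf a'" using sa F nn by (intro sum_le_suminf) auto
  finally show "sum a F \<le> S" unfolding S_def a'_def .
qed

lemma D_upper: "\<sigma> \<in> words nk k \<Longrightarrow> diameter (JS \<sigma>) \<le> diameter J * delta c k * exp (\<Sum>i\<in>{1..k}. a i)"
proof (induction k arbitrary: \<sigma>)
  case 0 then show ?case by (simp add: words_0 JS0 delta_0)
next
  case (Suc k)
  obtain \<tau> j where t: "\<sigma> = \<tau> @ [j]" "\<tau> \<in> words nk k" "j \<in> {1..nk (Suc k)}"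
    using Suc.prems words_Suc by blast
  obtain s0 where st: "\<forall>k \<sigma>. \<sigma> \<in> words nk k \<longrightarrow>
   (JS \<sigma> \<subseteq> J \<and> compact (JS \<sigma>) \<and> JS \<sigma> \<noteq> {} \<and> diameter (JS \<sigma>) > 0 \<and> pk (JS \<sigma>) 1 s0)"
    using struct by blast
  have dt: "diameter (JS \<tau>) > 0" using st t by blast
  have ca: "c (Suc k) > 0" "a (Suc k) > 0" using c_bounds a_pos by auto
  have "diameter (JS \<sigma>) \<le> c (Suc k) * (1 + a (Suc k)) * diameter (JS \<tau>)"
    using ratio(2)[OF t(2,3) dt] t by simp
  also have "\<dots> \<le> c (Suc k) * exp (a (Suc k)) * (diameter J * delta c k * exp (\<Sum>i\<in>{1..k}. a i))"
    using Suc.IH[OF t(2)] ca dt by (intro mult_mono mult_left_mono) (auto simp: add.commute)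
  also have "\<dots> = diameter J * delta c (Suc k) * exp (\<Sum>i\<in>{1..Suc k}. a i)"
    by (simp add: delta_Suc exp_add sum.atLeast1_atMost_eq prod.nat_ivl_Suc' ac_simps)
  finally show ?case .
qed

lemma exp_le_1m: "0 \<le> x \<Longrightarrow> x \<le> 1/2 \<Longrightarrow> exp (-2 * x) \<le> 1 - (x::real)"
proof -
  assume x: "0 \<le> x" "x \<le> 1/2"
  have e: "1 + 2 * x \<le> exp (2 * x)" by (rule exp_ge_add_one_self)
  have "0 \<le> x * (1 - 2 * x)" using x by simp
  then have "1 \<le> (1 - x) * (1 + 2 * x)" by (simp add: algebra_simps)
  also have "\<dots> \<le> (1 - x) * exp (2 * x)" using e x by (intro mult_left_mono) auto
  finally have "1 \<le> (1 - x) * exp (2 * x)" .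
  then show ?thesis by (simp add: exp_minus field_simps)
qed

lemma D_lower:
  assumes K1: "K1 \<ge> 1" "\<forall>k\<ge>K1. 0 \<le> a k \<and> a k \<le> 1/2"
  shows "\<exists>p>0. \<forall>k\<ge>K1. \<forall>\<sigma>\<in>words nk k. diameter (JS \<sigma>) \<ge> p * delta c k"
proof -
  obtain s0 where st: "\<forall>k \<sigma>. \<sigma> \<in> words nk k \<longrightarrow>
   (JS \<sigma> \<subseteq> J \<and> compact (JS \<sigma>) \<and> JS \<sigma> \<noteq> {} \<and> diameter (JS \<sigma>) > 0 \<and> pk (JS \<sigma>) 1 s0)"
    using struct by blast
  define m0 where "m0 = Min ((\<lambda>\<sigma>. diameter (JS \<sigma>)) ` words nk K1)"
  have m0: "m0 > 0" unfolding m0_def using words_finite words_ne[OF nk_ge] st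
    by (subst Min_gr_iff) auto
  have m0le: "m0 \<le> diameter (JS \<sigma>)" if "\<sigma> \<in> words nk K1" for \<sigma>
    unfolding m0_def using words_finite that by (intro Min_le) auto
  define q where "q = m0 / delta c K1"
  have q: "q > 0" using m0 delta_pos by (simp add: q_def)
  have claim: "\<sigma> \<in> words nk (K1 + j) \<Longrightarrow>
      diameter (JS \<sigma>) \<ge> q * delta c (K1 + j) * exp (-2 * (\<Sum>i\<in>{K1+1..K1+j}. a i))" for j \<sigma>
  proof (induction j arbitrary: \<sigma>)
    case 0
    then show ?case using m0le[of \<sigma>] delta_pos[of K1] by (simp add: q_def)
  next
    case (Suc j)
    obtain \<tau> i where t: "\<sigma> = \<tau> @ [i]" "\<tau> \<in> words nk (K1 + j)" "i \<in> {1..nk (Suc (K1 + j))}"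
      using Suc.prems words_Suc[of \<sigma> nk "K1 + j"] by auto
    have dt: "diameter (JS \<tau>) > 0" using st t by blast
    have ak: "0 \<le> a (Suc (K1 + j))" "a (Suc (K1 + j)) \<le> 1/2" using K1 by auto
    have ck: "c (Suc (K1 + j)) > 0" using c_bounds by auto
    have "q * delta c (K1 + Suc j) * exp (-2 * (\<Sum>i\<in>{K1+1..K1+Suc j}. a i))
        = c (Suc (K1 + j)) * exp (-2 * a (Suc (K1 + j))) * (q * delta c (K1 + j) * exp (-2 * (\<Sum>i\<in>{K1+1..K1+j}. a i)))"
      by (simp add: delta_Suc prod.nat_ivl_Suc' sum.nat_ivl_Suc' exp_add[symmetric] algebra_simps)
    also have "\<dots> \<le> c (Suc (K1 + j)) * (1 - a (Suc (K1 + j))) * diameter (JS \<tau>)"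
      using Suc.IH[OF t(2)] exp_le_1m[OF ak] ck q delta_pos[of "K1 + j"] ak
      by (intro mult_mono mult_left_mono) (auto intro!: mult_nonneg_nonneg)
    also have "\<dots> \<le> diameter (JS \<sigma>)"
      using ratio(1)[OF t(2) t(3) dt] t by simp
    finally show ?case .
  qed
  define p where "p = q * exp (-2 * S)"
  have "p > 0" using q by (simp add: p_def)
  moreover have "diameter (JS \<sigma>) \<ge> p * delta c k" if "k \<ge> K1" "\<sigma> \<in> words nk k" for k \<sigma>
  proof -
    have kk: "k = K1 + (k - K1)" using that by simp
    have "sum a {K1+1..K1+(k-K1)} \<le> S" using K1 by (intro sumS) auto
    then have "exp (-2 * S) \<le> exp (-2 * sum a {K1+1..K1+(k-K1)})" by simp
    then have "p * delta c k \<le> q * delta c (K1 + (k - K1)) * exp (-2 * sum a {K1+1..K1+(k-K1)})"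
      unfolding p_def using q delta_pos[of k] kk
      by (simp add: mult.commute mult.left_commute mult_left_mono)
    also have "\<dots> \<le> diameter (JS \<sigma>)" using claim[where j="k - K1" and \<sigma>=\<sigma>] that kk by simp
    finally show ?thesis .
  qed
  ultimately show ?thesis by blast
qed

lemma l_index_props:
  assumes th: "0 < \<theta>" "\<theta> < 1" and k: "k \<ge> 1"
  shows "k \<le> l_index c \<theta> k" "delta c (l_index c \<theta> k) \<ge> delta c k powr (1/\<theta>)"
    "delta c (Suc (l_index c \<theta> k)) < delta c k powr (1/\<theta>)"
proof -
  define P where "P l = (l \<ge> 1 \<and> delta c l \<ge> delta c k powr (1/\<theta>))" for l
  have pk': "delta c k powr (1/\<theta>) \<le> delta c k powr 1"
    using th delta_pos[of k] delta_le1[of k] by (intro powr_mono') auto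
  then have Pk: "P k" using k delta_pos[of k] by (simp add: P_def)
  have pos: "delta c k powr (1/\<theta>) > 0" using delta_pos[of k] by simp
  obtain k0 where k0: "delta c k0 < delta c k powr (1/\<theta>)" using delta_small[OF pos] by blast
  have bd: "P y \<Longrightarrow> y \<le> k0" for y
  proof (rule ccontr)
    assume "P y" "\<not> y \<le> k0"
    then have "delta c y \<le> delta c k0" by (intro delta_mono) simp
    then show False using \<open>P y\<close> k0 by (simp add: P_def)
  qed
  have L: "l_index c \<theta> k = Greatest P" unfolding l_index_def P_def by simp
  show "k \<le> l_index c \<theta> k" unfolding L by (rule Greatest_le_nat[of P k k0, OF Pk bd])
  show "delta c (l_index c \<theta> k) \<ge> delta c k powr (1/\<theta>)"
    using GreatestI_nat[of P k k0, OF Pk bd] unfolding L P_def by simp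
  show "delta c (Suc (l_index c \<theta> k)) < delta c k powr (1/\<theta>)"
  proof (rule ccontr)
    assume "\<not> ?thesis"
    then have "P (Suc (Greatest P))" unfolding P_def L by simp
    then have "Suc (Greatest P) \<le> Greatest P" by (rule Greatest_le_nat[of P _ k0, OF _ bd])
    then show False by simp
  qed
qed


definition ST :: "real \<Rightarrow> bool" where
  "ST s0 \<longleftrightarrow> s0 > 0 \<and> (\<forall>k \<sigma>. \<sigma> \<in> words nk k \<longrightarrow>
   (JS \<sigma> \<subseteq> J \<and> compact (JS \<sigma>) \<and> JS \<sigma> \<noteq> {} \<and> diameter (JS \<sigma>) > 0 \<and> pk (JS \<sigma>) 1 s0))"

lemma ST_ex: "\<exists>s0. ST s0" using struct unfolding ST_def by blast

lemma ST_D: "ST s0 \<Longrightarrow> \<sigma> \<in> words nk k \<Longrightarrow>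
   JS \<sigma> \<subseteq> J \<and> compact (JS \<sigma>) \<and> JS \<sigma> \<noteq> {} \<and> diameter (JS \<sigma>) > 0 \<and> pk (JS \<sigma>) 1 s0"
  unfolding ST_def by blast

lemma count_meet:
  assumes st: "ST s0" and p: "p > 0" and t: "t \<ge> 0"
    and Db: "\<forall>\<sigma>\<in>words nk l. p * delta c l \<le> diameter (JS \<sigma>) \<and> diameter (JS \<sigma>) \<le> P * delta c l"
  shows "real (card {\<tau>\<in>words nk l. JS \<tau> \<inter> cball x t \<noteq> {}}) * (s0 * p * delta c l) ^ DIM('a)
         \<le> (t + P * delta c l) ^ DIM('a)"
proof -
  define T where "T = {\<tau>\<in>words nk l. JS \<tau> \<inter> cball x t \<noteq> {}}"
  have fT: "finite T" unfolding T_def using words_finite[of nk l] by simp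
  have s0: "s0 > 0" using st by (simp add: ST_def)
  have "\<forall>\<tau>\<in>T. \<exists>y. ball y (s0 * diameter (JS \<tau>)) \<subseteq> JS \<tau>"
  proof
    fix \<tau> assume "\<tau> \<in> T"
    then have "pk (JS \<tau>) 1 s0" using ST_D[OF st] by (auto simp: T_def)
    then obtain S where "card S = 1" "\<forall>x\<in>S. ball x (s0 * diameter (JS \<tau>)) \<subseteq> JS \<tau>"
      unfolding pk_def by blast
    then show "\<exists>y. ball y (s0 * diameter (JS \<tau>)) \<subseteq> JS \<tau>" by (metis card_1_singletonE singletonI)
  qed
  then obtain y where y: "\<And>\<tau>. \<tau> \<in> T \<Longrightarrow> ball (y \<tau>) (s0 * diameter (JS \<tau>)) \<subseteq> JS \<tau>" by metis
  have rad: "ball (y \<tau>) (s0 * p * delta c l) \<subseteq> JS \<tau>" if "\<tau> \<in> T" for \<tau>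
  proof -
    have "s0 * p * delta c l \<le> s0 * diameter (JS \<tau>)"
      using Db that s0 by (auto simp: T_def mult.assoc intro: mult_left_mono)
    then show ?thesis using y[OF that] subset_ball by blast
  qed
  show ?thesis unfolding T_def[symmetric]
  proof (rule balls_bound[OF fT])
    show "s0 * p * delta c l > 0" using s0 p delta_pos by simp
    have "words nk l \<noteq> {}" by (rule words_ne[OF nk_ge])
    then obtain \<sigma> where "\<sigma> \<in> words nk l" by blast
    then have "0 \<le> P * delta c l" using Db ST_D[OF st] by (meson less_imp_le order_trans)
    then show "0 \<le> t + P * delta c l" using t by simp
    show "\<forall>i\<in>T. ball (y i) (s0 * p * delta c l) \<subseteq> cball x (t + P * delta c l)"
    proof (intro ballI subsetI)
      fix \<tau> z assume \<tau>: "\<tau> \<in> T" and z: "z \<in> ball (y \<tau>) (s0 * p * delta c l)"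
      obtain w where w: "w \<in> JS \<tau>" "dist x w \<le> t" using \<tau> by (auto simp: T_def)
      have zJ: "z \<in> JS \<tau>" using rad[OF \<tau>] z by blast
      have bd: "bounded (JS \<tau>)" using ST_D[OF st] \<tau> compact_imp_bounded by (auto simp: T_def)
      have "dist w z \<le> diameter (JS \<tau>)" using diameter_bounded_bound[OF bd w(1) zJ] .
      also have "\<dots> \<le> P * delta c l" using Db \<tau> by (auto simp: T_def)
      finally show "z \<in> cball x (t + P * delta c l)" using w dist_triangle[of x z w] by simp
    qed
    show "\<forall>i\<in>T. \<forall>j\<in>T. i \<noteq> j \<longrightarrow> ball (y i) (s0 * p * delta c l) \<inter> ball (y j) (s0 * p * delta c l) = {}"
    proof (intro ballI impI)
      fix i j assume ij: "i \<in> T" "j \<in> T" "i \<noteq> j"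
      have "ball (y i) (s0 * p * delta c l) \<subseteq> interior (JS i)" using rad[OF ij(1)] by (simp add: interior_maximal)
      moreover have "ball (y j) (s0 * p * delta c l) \<subseteq> interior (JS j)" using rad[OF ij(2)] by (simp add: interior_maximal)
      moreover have "interior (JS i) \<inter> interior (JS j) = {}" using int_dis ij by (auto simp: T_def)
      ultimately show "ball (y i) (s0 * p * delta c l) \<inter> ball (y j) (s0 * p * delta c l) = {}" by blast
    qed
  qed
qed

lemma cover_cyl:
  assumes st: "ST s0" and Dup: "\<forall>\<sigma>\<in>words nk l. diameter (JS \<sigma>) \<le> r"
  shows "X \<inter> E \<subseteq> (\<Union>z\<in>(\<lambda>\<tau>. SOME y. y \<in> JS \<tau>) ` {\<tau>\<in>words nk l. JS \<tau> \<inter> X \<noteq> {}}. cball z r)"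
proof
  fix x assume x: "x \<in> X \<inter> E"
  then obtain \<tau> where \<tau>: "\<tau> \<in> words nk l" "x \<in> JS \<tau>" using E_sub[of l] by blast
  have ne: "JS \<tau> \<noteq> {}" using \<tau> by blast
  define y where "y = (SOME y. y \<in> JS \<tau>)"
  have y: "y \<in> JS \<tau>" unfolding y_def using ne by (simp add: some_in_eq)
  have bd: "bounded (JS \<tau>)" using ST_D[OF st \<tau>(1)] compact_imp_bounded by blast
  have "dist y x \<le> r" using diameter_bounded_bound[OF bd y \<tau>(2)] Dup \<tau>(1) by force
  moreover have "\<tau> \<in> {\<tau>\<in>words nk l. JS \<tau> \<inter> X \<noteq> {}}" using \<tau> x by blast
  ultimately show "x \<in> (\<Union>z\<in>(\<lambda>\<tau>. SOME y. y \<in> JS \<tau>) ` {\<tau>\<in>words nk l. JS \<tau> \<inter> X \<noteq> {}}. cball z r)"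
    unfolding y_def by auto
qed


lemma bounds: "\<exists>K1 p P s0 Nm. K1 \<ge> 1 \<and> p > 0 \<and> P > 0 \<and> ST s0 \<and> Nm \<ge> 1 \<and>
   (\<forall>k\<ge>K1. \<forall>\<sigma>\<in>words nk k. p * delta c k \<le> diameter (JS \<sigma>)) \<and>
   (\<forall>k. \<forall>\<sigma>\<in>words nk k. diameter (JS \<sigma>) \<le> P * delta c k) \<and>
   (\<forall>k\<ge>K1. c k ^ DIM('a) \<le> 2/3 \<and> real (nk k) \<le> Nm)"
proof -
  obtain K1 where K1: "K1 \<ge> 1" "\<forall>k\<ge>K1. a k \<le> 1/2 \<and> 0 \<le> a k \<and> (1 - a k) ^ DIM('a) \<ge> 3/4 \<and> c k ^ DIM('a) \<le> 2/3
      \<and> real (nk k) \<le> 4 / (3 * \<eta> ^ DIM('a))" using eventual by blast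
  obtain p where p: "p > 0" "\<forall>k\<ge>K1. \<forall>\<sigma>\<in>words nk k. diameter (JS \<sigma>) \<ge> p * delta c k"
    using D_lower[of K1] K1 by auto
  obtain s0 where s0: "ST s0" using ST_ex by blast
  define P where "P = diameter J * exp S"
  have P: "P > 0" using J_diam by (simp add: P_def)
  have Dup: "\<forall>k. \<forall>\<sigma>\<in>words nk k. diameter (JS \<sigma>) \<le> P * delta c k"
  proof (intro allI ballI)
    fix k \<sigma> assume "\<sigma> \<in> words nk k"
    then have "diameter (JS \<sigma>) \<le> diameter J * delta c k * exp (\<Sum>i\<in>{1..k}. a i)" by (rule D_upper)
    also have "\<dots> \<le> diameter J * delta c k * exp S"
      using sumS(1)[of "{1..k}"] J_diam delta_pos[of k] by (intro mult_left_mono) auto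
    finally show "diameter (JS \<sigma>) \<le> P * delta c k" by (simp add: P_def ac_simps)
  qed
  define Nm where "Nm = 4 / (3 * \<eta> ^ DIM('a))"
  have "real (nk K1) \<le> Nm" "real (nk K1) \<ge> 2" using K1 nk_ge by (auto simp: Nm_def)
  then have "Nm \<ge> 1" by simp
  then show ?thesis using K1 p P s0 Dup unfolding Nm_def[symmetric] by blast
qed

lemma delta_lt1: "k \<ge> 1 \<Longrightarrow> delta c k < 1"
proof -
  assume "k \<ge> 1"
  then have "delta c k \<le> delta c 1" by (rule delta_mono)
  also have "delta c 1 < 1" using c_bounds by (simp add: delta_Suc[of 0, simplified] delta_0)
  finally show ?thesis .
qed

lemma ext_card': "\<sigma> \<in> words nk k \<Longrightarrow> k \<le> l \<Longrightarrow>
   card {\<tau> \<in> words nk l. take k \<tau> = \<sigma>} = (\<Prod>i\<in>{k+1..l}. nk i)"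
  using ext_card[of \<sigma> nk k "l - k"] by simp

lemma prod_ge1: "1 \<le> (\<Prod>i\<in>{k+1..l}. nk i)"
  using nk_ge by (intro prod_ge_1) (metis One_nat_def atLeastAtMost_iff le_trans less_imp_le_nat numeral_2_eq_2 le_add2 lessI Suc_le_eq)

lemma ratio_powr:
  fixes R \<theta> s :: real
  assumes R: "R > 0"
  shows "(R / R powr (1/\<theta>)) powr s = exp (s * (1/\<theta> - 1) * (- ln R))"
proof -
  have "R / R powr (1/\<theta>) = exp ((1 - 1/\<theta>) * ln R)"
  proof -
    have "R / R powr (1/\<theta>) = exp (ln R) / exp (1/\<theta> * ln R)" using R by (simp add: powr_def exp_ln[OF R])
    also have "\<dots> = exp ((1 - 1/\<theta>) * ln R)" by (simp add: exp_diff[symmetric] algebra_simps)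
    finally show ?thesis .
  qed
  then show ?thesis by (simp add: powr_def algebra_simps)
qed


lemma partI:
  assumes th: "0 < \<theta>" "\<theta> < 1" and s: "s \<ge> 0"
    and hyp: "\<forall>k\<ge>K2. s * (1/\<theta> - 1) * (- ln (delta c k)) \<le> ln (real (\<Prod>i\<in>{k+1..l_index c \<theta> k}. nk i))"
  shows "\<exists>b>0. \<exists>C>0. \<forall>R. 0 < R \<and> R < b \<longrightarrow> (\<forall>x\<in>E.
        real (covering_number (R powr (1/\<theta>)) (cball x R \<inter> E))
          \<ge> C * (R / R powr (1/\<theta>)) powr s)"
proof -
  obtain K1 p P s0 Nm where K1: "K1 \<ge> 1" and p: "p > 0" and P: "P > 0" and st: "ST s0" and Nm: "Nm \<ge> 1"
    and Dlo: "\<forall>k\<ge>K1. \<forall>\<sigma>\<in>words nk k. p * delta c k \<le> diameter (JS \<sigma>)"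
    and Dup: "\<forall>k. \<forall>\<sigma>\<in>words nk k. diameter (JS \<sigma>) \<le> P * delta c k"
    and ev: "\<forall>k\<ge>K1. c k ^ DIM('a) \<le> 2/3 \<and> real (nk k) \<le> Nm"
    using bounds by blast
  have s0: "s0 > 0" using st by (simp add: ST_def)
  define e where "e = 1/\<theta> - 1"
  have e: "e > 0" using th by (simp add: e_def)
  define K where "K = max K1 (max K2 1)"
  define A where "A = (P / \<eta>) powr (1/\<theta>)"
  have A: "A > 0" using P eta by (simp add: A_def)
  define M0 where "M0 = ((A + P) / (s0 * p)) ^ DIM('a)"
  have M0: "M0 > 0" using A P s0 p by (simp add: M0_def)
  define b where "b = P * delta c K"
  define C where "C = exp (s * e * ln P) / M0"
  have b: "b > 0" using P delta_pos by (simp add: b_def)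
  have C: "C > 0" using M0 by (simp add: C_def)
  show ?thesis
  proof -
   have "C * (R / R powr (1/\<theta>)) powr s \<le> real (covering_number (R powr (1/\<theta>)) (cball x R \<inter> E))"
     if R: "0 < R \<and> R < b" and x: "x \<in> E" for R x
   proof -
    have ex: "\<exists>k. P * delta c k \<le> R"
    proof -
      obtain k where "delta c k < R / P" using delta_small[of "R / P"] R P by auto
      then show ?thesis using P by (auto simp: field_simps intro: exI[of _ k])
    qed
    define k where "k = (LEAST k. P * delta c k \<le> R)"
    have kR: "P * delta c k \<le> R" unfolding k_def by (rule LeastI_ex[OF ex])
    have kK: "k > K"
    proof (rule ccontr)
      assume "\<not> k > K"
      then have "delta c K \<le> delta c k" by (intro delta_mono) simp
      then have "b \<le> P * delta c k" using P by (simp add: b_def)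
      then show False using kR R by simp
    qed
    then have k1: "k \<ge> 1" "k \<ge> K1" "k \<ge> K2" by (auto simp: K_def)
    have "\<not> P * delta c (k - 1) \<le> R" unfolding k_def by (rule not_less_Least) (use k1 k_def in simp)
    then have Rlt: "R < P * delta c (k - 1)" by simp
    have "delta c k \<ge> \<eta> * delta c (k - 1)" using delta_Suc_ge[of "k - 1"] k1 by simp
    then have "\<eta> * R \<le> P * delta c k" using Rlt eta P
      by (smt (verit, best) mult.left_commute mult_left_mono)
    then have Rle: "R \<le> (P / \<eta>) * delta c k" using eta by (simp add: field_simps)
    obtain \<sigma> where \<sigma>: "\<sigma> \<in> words nk k" "x \<in> JS \<sigma>" using E_sub[of k] x by blast
    have bd\<sigma>: "bounded (JS \<sigma>)" using ST_D[OF st \<sigma>(1)] compact_imp_bounded by blast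
    have sub\<sigma>: "JS \<sigma> \<subseteq> cball x R"
    proof
      fix y assume "y \<in> JS \<sigma>"
      then have "dist x y \<le> diameter (JS \<sigma>)" using diameter_bounded_bound[OF bd\<sigma> \<sigma>(2)] by blast
      also have "\<dots> \<le> R" using Dup \<sigma>(1) kR by force
      finally show "y \<in> cball x R" by simp
    qed
    define l where "l = l_index c \<theta> k"
    have kl: "k \<le> l" and dl: "delta c l \<ge> delta c k powr (1/\<theta>)"
      using l_index_props[OF th k1(1)] by (auto simp: l_def)
    define r where "r = R powr (1/\<theta>)"
    have r: "r > 0" using R by (simp add: r_def)
    have "r \<le> ((P / \<eta>) * delta c k) powr (1/\<theta>)"
      unfolding r_def using R Rle th by (intro powr_mono2) auto
    also have "\<dots> = A * delta c k powr (1/\<theta>)" unfolding A_def by (rule powr_mult)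
    also have "\<dots> \<le> A * delta c l" using dl A by simp
    finally have rA: "r \<le> A * delta c l" .
    have cnt: "real (card {\<tau>\<in>words nk l. JS \<tau> \<inter> cball z r \<noteq> {}}) \<le> M0" for z
    proof -
      have Db: "\<forall>\<sigma>\<in>words nk l. p * delta c l \<le> diameter (JS \<sigma>) \<and> diameter (JS \<sigma>) \<le> P * delta c l"
        using Dlo Dup kl k1 by auto
      have "real (card {\<tau>\<in>words nk l. JS \<tau> \<inter> cball z r \<noteq> {}}) * (s0 * p * delta c l) ^ DIM('a)
         \<le> (r + P * delta c l) ^ DIM('a)"
        by (rule count_meet[OF st p _ Db]) (use r in simp)
      also have "\<dots> \<le> ((A + P) * delta c l) ^ DIM('a)"
        using rA r P delta_pos[of l] by (intro power_mono) (auto simp: algebra_simps)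
      also have "\<dots> = M0 * (s0 * p * delta c l) ^ DIM('a)"
      proof -
        have "(A + P) / (s0 * p) * (s0 * p * delta c l) = (A + P) * delta c l" using s0 p by simp
        then show ?thesis unfolding M0_def by (metis power_mult_distrib)
      qed
      finally show ?thesis using s0 p delta_pos[of l] by (simp add: mult_le_cancel_right)
    qed
    define X where "X = cball x R \<inter> E"
    obtain l' where l': "delta c l' < r / P" using delta_small[of "r / P"] r P by auto
    have Dl': "\<forall>\<sigma>\<in>words nk l'. diameter (JS \<sigma>) \<le> r"
      using Dup l' P by (force simp: field_simps)
    have cv: "X \<subseteq> (\<Union>z\<in>(\<lambda>\<tau>. SOME y. y \<in> JS \<tau>) ` {\<tau>\<in>words nk l'. JS \<tau> \<inter> cball x R \<noteq> {}}. cball z r)"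
      using cover_cyl[OF st Dl', of "cball x R"] unfolding X_def .
    have fcv: "finite ((\<lambda>\<tau>. SOME y. y \<in> JS \<tau>) ` {\<tau>\<in>words nk l'. JS \<tau> \<inter> cball x R \<noteq> {}})"
      using words_finite[of nk l'] by simp
    obtain C' where C': "finite C'" "card C' = covering_number r X" "X \<subseteq> (\<Union>z\<in>C'. cball z r)"
      using cov_ex[OF fcv cv] by blast
    define Ext where "Ext = {\<tau>\<in>words nk l. take k \<tau> = \<sigma>}"
    have cExt: "card Ext = (\<Prod>i\<in>{k+1..l}. nk i)" unfolding Ext_def by (rule ext_card'[OF \<sigma>(1) kl])
    have "Ext \<subseteq> (\<Union>z\<in>C'. {\<tau>\<in>words nk l. JS \<tau> \<inter> cball z r \<noteq> {}})"
    proof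
      fix \<tau> assume \<tau>: "\<tau> \<in> Ext"
      then have \<tau>w: "\<tau> \<in> words nk l" by (simp add: Ext_def)
      obtain y where y: "y \<in> E" "y \<in> JS \<tau>" using E_pt[OF \<tau>w] by blast
      have "JS \<tau> \<subseteq> JS \<sigma>" using nested[OF \<tau>w kl] \<tau> by (simp add: Ext_def)
      then have "y \<in> X" using y sub\<sigma> by (auto simp: X_def)
      then obtain z where "z \<in> C'" "y \<in> cball z r" using C'(3) by blast
      then show "\<tau> \<in> (\<Union>z\<in>C'. {\<tau>\<in>words nk l. JS \<tau> \<inter> cball z r \<noteq> {}})" using y \<tau>w by blast
    qed
    moreover have "finite (\<Union>z\<in>C'. {\<tau>\<in>words nk l. JS \<tau> \<inter> cball z r \<noteq> {}})"
      by (rule finite_subset[OF _ words_finite[of nk l]]) blast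
    ultimately have "card Ext \<le> card (\<Union>z\<in>C'. {\<tau>\<in>words nk l. JS \<tau> \<inter> cball z r \<noteq> {}})"
      by (intro card_mono)
    also have "\<dots> \<le> (\<Sum>z\<in>C'. card {\<tau>\<in>words nk l. JS \<tau> \<inter> cball z r \<noteq> {}})"
      by (rule card_UN_le[OF C'(1)])
    finally have "real (card Ext) \<le> real (\<Sum>z\<in>C'. card {\<tau>\<in>words nk l. JS \<tau> \<inter> cball z r \<noteq> {}})"
      by (simp only: of_nat_le_iff)
    also have "\<dots> = (\<Sum>z\<in>C'. real (card {\<tau>\<in>words nk l. JS \<tau> \<inter> cball z r \<noteq> {}}))"
      by (rule of_nat_sum)
    also have "\<dots> \<le> real (card C') * M0" using cnt by (intro sum_bounded_above) auto
    finally have LkM: "real (\<Prod>i\<in>{k+1..l}. nk i) \<le> real (covering_number r X) * M0"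
      using cExt C'(2) by simp
    have Lk_pos: "real (\<Prod>i\<in>{k+1..l}. nk i) > 0" using prod_ge1[of k l] by linarith
    have lnh: "s * e * (- ln (delta c k)) \<le> ln (real (\<Prod>i\<in>{k+1..l}. nk i))"
      using hyp k1 by (simp add: e_def l_def)
    have "delta c k \<le> R / P" using kR P by (simp add: field_simps mult.commute)
    then have "ln (delta c k) \<le> ln (R / P)" using delta_pos[of k] by (subst ln_le_cancel_iff) auto
    then have "ln P - ln R \<le> - ln (delta c k)" using P R by (simp add: ln_div)
    then have "s * e * (ln P - ln R) \<le> s * e * (- ln (delta c k))" using s e by (intro mult_left_mono) auto
    also have "\<dots> \<le> ln (real (\<Prod>i\<in>{k+1..l}. nk i))" by (rule lnh)
    finally have "exp (s * e * (ln P - ln R)) \<le> real (\<Prod>i\<in>{k+1..l}. nk i)"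
      using Lk_pos by (metis exp_le_cancel_iff exp_ln)
    also have "\<dots> \<le> real (covering_number r X) * M0" by (rule LkM)
    finally have fin: "exp (s * e * (ln P - ln R)) \<le> real (covering_number r X) * M0" .
    have "C * (R / R powr (1/\<theta>)) powr s = exp (s * e * ln P) / M0 * exp (s * e * (- ln R))"
      using ratio_powr[of R \<theta> s] R by (simp add: C_def e_def)
    also have "\<dots> = exp (s * e * (ln P - ln R)) / M0"
      by (simp add: exp_add[symmetric] algebra_simps)
    also have "\<dots> \<le> real (covering_number r X)" using fin M0 by (simp add: pos_divide_le_eq)
    finally have G: "C * (R / R powr (1/\<theta>)) powr s \<le> real (covering_number r X)" .
    show ?thesis using G by (simp add: r_def X_def)
   qed
   then show ?thesis using b C by blast
  qed
qed


lemma partII_ev: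
  assumes th: "0 < \<theta>" "\<theta> < 1" and s: "s \<ge> 0" and b: "b > 0" and C: "C > 0"
    and hyp: "\<forall>R. 0 < R \<and> R < b \<longrightarrow> (\<forall>x\<in>E.
        real (covering_number (R powr (1/\<theta>)) (cball x R \<inter> E)) \<ge> C * (R / R powr (1/\<theta>)) powr s)"
    and eps: "\<epsilon> > 0"
  shows "\<exists>K3. \<forall>k\<ge>K3. s - \<epsilon> \<le> ln (real (\<Prod>i\<in>{k+1..l_index c \<theta> k}. nk i)) / ((1 - 1/\<theta>) * ln (delta c k))"
proof -
  obtain K1 p P s0 Nm where K1: "K1 \<ge> 1" and p: "p > 0" and P: "P > 0" and st: "ST s0" and Nm: "Nm \<ge> 1"
    and Dlo: "\<forall>k\<ge>K1. \<forall>\<sigma>\<in>words nk k. p * delta c k \<le> diameter (JS \<sigma>)"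
    and Dup: "\<forall>k. \<forall>\<sigma>\<in>words nk k. diameter (JS \<sigma>) \<le> P * delta c k"
    and ev: "\<forall>k\<ge>K1. c k ^ DIM('a) \<le> 2/3 \<and> real (nk k) \<le> Nm"
    using bounds by blast
  have s0: "s0 > 0" using st by (simp add: ST_def)
  define e where "e = 1/\<theta> - 1"
  have e: "e > 0" using th by (simp add: e_def)
  define M1 where "M1 = ((1 + P) / (s0 * p)) ^ DIM('a)"
  have M1: "M1 > 0" using P s0 p by (simp add: M1_def)
  obtain j0 where j0: "(2/3::real) ^ j0 < 1 / P ^ DIM('a)" using real_arch_pow_inv[of "1 / P ^ DIM('a)" "2/3"] P by auto
  define c1 where "c1 = ln (M1 * Nm ^ Suc j0) - ln C"
  obtain x0 where x0: "x0 \<in> E" using E_pt[of "[]" 0] by (auto simp: words_0)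
  obtain kb where kb: "delta c kb < b" using delta_small[OF b] by blast
  obtain ke where ke: "delta c ke < exp (- (\<bar>c1\<bar> / (e * \<epsilon>)))" using delta_small[of "exp (- (\<bar>c1\<bar> / (e * \<epsilon>)))"] by auto
  define K3 where "K3 = max K1 (max kb ke)"
  show ?thesis
  proof (intro exI[of _ K3] allI impI)
    fix k assume k: "K3 \<le> k"
    then have k1: "k \<ge> 1" "k \<ge> K1" using K1 by (auto simp: K3_def)
    have dkb: "delta c k < b" using delta_mono[of kb k] kb k by (simp add: K3_def)
    have dke: "delta c k < exp (- (\<bar>c1\<bar> / (e * \<epsilon>)))" using delta_mono[of ke k] ke k by (simp add: K3_def)
    define R where "R = delta c k"
    have R: "R > 0" "R < b" using delta_pos dkb by (auto simp: R_def)
    define r where "r = R powr (1/\<theta>)"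
    have r: "r > 0" using R by (simp add: r_def)
    define lnd where "lnd = - ln (delta c k)"
    have lnd_big: "lnd > \<bar>c1\<bar> / (e * \<epsilon>)"
    proof -
      have "ln (delta c k) < ln (exp (- (\<bar>c1\<bar> / (e * \<epsilon>))))" using dke delta_pos[of k] by (subst ln_less_cancel_iff) auto
      then show ?thesis by (simp add: lnd_def)
    qed
    have lnd: "lnd > 0" using lnd_big e eps by (smt (verit) divide_nonneg_pos mult_pos_pos abs_ge_zero)
    have "C * (R / R powr (1/\<theta>)) powr s \<le> real (covering_number (R powr (1/\<theta>)) (cball x0 R \<inter> E))"
      using hyp R x0 by blast
    moreover have "(R / R powr (1/\<theta>)) powr s = exp (s * e * lnd)"
      using ratio_powr[of R \<theta> s] R by (simp add: e_def lnd_def R_def)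
    ultimately have low: "C * exp (s * e * lnd) \<le> real (covering_number r (cball x0 R \<inter> E))"
      by (simp add: r_def)
    define l where "l = l_index c \<theta> k"
    have kl: "k \<le> l" and dl: "delta c (Suc l) < delta c k powr (1/\<theta>)"
      using l_index_props[OF th k1(1)] by (auto simp: l_def)
    define m where "m = Suc l + j0"
    have lm: "k \<le> m" "l \<le> m" using kl by (auto simp: m_def)
    have "delta c m ^ DIM('a) \<le> (2/3) ^ j0 * delta c (Suc l) ^ DIM('a)"
      unfolding m_def by (rule delta_decay) (use ev kl k1 in auto)
    also have "\<dots> \<le> (1 / P ^ DIM('a)) * delta c (Suc l) ^ DIM('a)"
      using j0 delta_pos[of "Suc l"] by (intro mult_right_mono) auto
    also have "\<dots> < (1 / P ^ DIM('a)) * r ^ DIM('a)"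
      using dl delta_pos[of "Suc l"] P by (intro mult_strict_left_mono power_strict_mono) (auto simp: r_def R_def)
    also have "\<dots> = (r / P) ^ DIM('a)" by (simp add: power_divide)
    finally have "delta c m < r / P" using r P by (meson less_imp_le divide_nonneg_pos power_less_imp_less_base)
    then have Pm: "P * delta c m \<le> r" using P by (simp add: field_simps)
    have Dm: "\<forall>\<sigma>\<in>words nk m. diameter (JS \<sigma>) \<le> r" using Dup Pm by (meson order_trans)
    define T where "T = {\<tau>\<in>words nk m. JS \<tau> \<inter> cball x0 R \<noteq> {}}"
    have fT: "finite T" unfolding T_def using words_finite[of nk m] by simp
    have "covering_number r (cball x0 R \<inter> E) \<le> card ((\<lambda>\<tau>. SOME y. y \<in> JS \<tau>) ` T)"
      by (rule cov_le) (use fT cover_cyl[OF st Dm, of "cball x0 R"] in \<open>auto simp: T_def\<close>)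
    also have "\<dots> \<le> card T" using fT by (rule card_image_le)
    finally have covT: "covering_number r (cball x0 R \<inter> E) \<le> card T" .
    define Sk where "Sk = {\<sigma>\<in>words nk k. JS \<sigma> \<inter> cball x0 R \<noteq> {}}"
    have fSk: "finite Sk" unfolding Sk_def using words_finite[of nk k] by simp
    have "T \<subseteq> (\<Union>\<sigma>\<in>Sk. {\<tau>\<in>words nk m. take k \<tau> = \<sigma>})"
    proof
      fix \<tau> assume \<tau>: "\<tau> \<in> T"
      then have \<tau>w: "\<tau> \<in> words nk m" by (simp add: T_def)
      have "JS \<tau> \<subseteq> JS (take k \<tau>)" by (rule nested[OF \<tau>w lm(1)])
      then have "take k \<tau> \<in> Sk" using \<tau> words_take[OF \<tau>w lm(1)] by (auto simp: T_def Sk_def)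
      then show "\<tau> \<in> (\<Union>\<sigma>\<in>Sk. {\<tau>\<in>words nk m. take k \<tau> = \<sigma>})" using \<tau>w by blast
    qed
    moreover have "finite (\<Union>\<sigma>\<in>Sk. {\<tau>\<in>words nk m. take k \<tau> = \<sigma>})"
      by (rule finite_subset[OF _ words_finite[of nk m]]) blast
    ultimately have "card T \<le> card (\<Union>\<sigma>\<in>Sk. {\<tau>\<in>words nk m. take k \<tau> = \<sigma>})"
      by (intro card_mono)
    also have "\<dots> \<le> (\<Sum>\<sigma>\<in>Sk. card {\<tau>\<in>words nk m. take k \<tau> = \<sigma>})" by (rule card_UN_le[OF fSk])
    also have "\<dots> = (\<Sum>\<sigma>\<in>Sk. (\<Prod>i\<in>{k+1..m}. nk i))"
      using ext_card'[OF _ lm(1)] by (intro sum.cong) (auto simp: Sk_def)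
    also have "\<dots> = card Sk * (\<Prod>i\<in>{k+1..m}. nk i)" by simp
    finally have cT: "real (card T) \<le> real (card Sk) * real (\<Prod>i\<in>{k+1..m}. nk i)"
      by (metis of_nat_le_iff of_nat_mult)
    have cSk: "real (card Sk) \<le> M1"
    proof -
      have Db: "\<forall>\<sigma>\<in>words nk k. p * delta c k \<le> diameter (JS \<sigma>) \<and> diameter (JS \<sigma>) \<le> P * delta c k"
        using Dlo Dup k1 by auto
      have "real (card Sk) * (s0 * p * delta c k) ^ DIM('a) \<le> (R + P * delta c k) ^ DIM('a)"
        unfolding Sk_def by (rule count_meet[OF st p _ Db]) (use R in simp)
      also have "\<dots> = M1 * (s0 * p * delta c k) ^ DIM('a)"
      proof -
        have "(1 + P) / (s0 * p) * (s0 * p * delta c k) = (1 + P) * delta c k" using s0 p by simp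
        also have "\<dots> = R + P * delta c k" by (simp add: R_def algebra_simps)
        finally have "(1 + P) / (s0 * p) * (s0 * p * delta c k) = R + P * delta c k" .
        then show ?thesis unfolding M1_def by (metis power_mult_distrib)
      qed
      finally show ?thesis using s0 p delta_pos[of k] by (simp add: mult_le_cancel_right)
    qed
    have split: "{k+1..m} = {k+1..l} \<union> {l+1..m}" using kl lm by auto
    have eqp: "(\<Prod>i\<in>{k+1..m}. real (nk i)) = (\<Prod>i\<in>{k+1..l}. real (nk i)) * (\<Prod>i\<in>{l+1..m}. real (nk i))"
      unfolding split by (rule prod.union_disjoint) auto
    have le: "(\<Prod>i\<in>{l+1..m}. real (nk i)) \<le> Nm ^ Suc j0"
      using ev kl k1 Nm by (intro prod_le_power) (auto simp: m_def)
    have "real (\<Prod>i\<in>{k+1..m}. nk i) = (\<Prod>i\<in>{k+1..l}. real (nk i)) * (\<Prod>i\<in>{l+1..m}. real (nk i))"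
      unfolding of_nat_prod by (rule eqp)
    also have "\<dots> \<le> (\<Prod>i\<in>{k+1..l}. real (nk i)) * Nm ^ Suc j0"
      by (rule mult_left_mono[OF le]) (simp add: prod_nonneg)
    finally have pr: "real (\<Prod>i\<in>{k+1..m}. nk i) \<le> real (\<Prod>i\<in>{k+1..l}. nk i) * Nm ^ Suc j0"
      unfolding of_nat_prod .
    define Lk where "Lk = real (\<Prod>i\<in>{k+1..l}. nk i)"
    have Lk: "Lk \<ge> 1" unfolding Lk_def using prod_ge1[of k l] by linarith
    have "C * exp (s * e * lnd) \<le> real (card Sk) * real (\<Prod>i\<in>{k+1..m}. nk i)"
      using low covT cT by linarith
    also have "\<dots> \<le> M1 * (Lk * Nm ^ Suc j0)"
      using cSk pr by (intro mult_mono) (auto simp: Lk_def prod_nonneg)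
    finally have main: "C * exp (s * e * lnd) \<le> (M1 * Nm ^ Suc j0) * Lk" by (simp add: ac_simps)
    have "ln (C * exp (s * e * lnd)) \<le> ln ((M1 * Nm ^ Suc j0) * Lk)"
      using main C M1 Nm Lk by (subst ln_le_cancel_iff) auto
    then have "ln C + s * e * lnd \<le> ln (M1 * Nm ^ Suc j0) + ln Lk"
      using C M1 Nm Lk by (simp add: ln_mult)
    then have lnLk: "s * e * lnd - c1 \<le> ln Lk" by (simp add: c1_def)
    have c1e: "c1 \<le> \<epsilon> * (e * lnd)"
    proof -
      have "\<bar>c1\<bar> / (e * \<epsilon>) < lnd" by (rule lnd_big)
      then have "\<bar>c1\<bar> < lnd * (e * \<epsilon>)" using e eps by (simp add: pos_divide_less_eq)
      then show ?thesis by (simp add: algebra_simps)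
    qed
    have den: "(1 - 1/\<theta>) * ln (delta c k) = e * lnd" by (simp add: e_def lnd_def algebra_simps)
    have h: "(s - \<epsilon>) * (e * lnd) = s * e * lnd - \<epsilon> * (e * lnd)" by (simp add: algebra_simps)
    have "(s - \<epsilon>) * (e * lnd) \<le> ln Lk" using lnLk c1e h by linarith
    then have "s - \<epsilon> \<le> ln Lk / (e * lnd)"
      using e lnd by (simp add: pos_le_divide_eq)
    then show "s - \<epsilon> \<le> ln (real (\<Prod>i\<in>{k+1..l_index c \<theta> k}. nk i)) / ((1 - 1/\<theta>) * ln (delta c k))"
      unfolding den by (simp add: Lk_def l_def)
  qed
qed


lemma main:
  assumes th: "0 < \<theta>" "\<theta> < 1"
  shows "lower_spectrum \<theta> E =
    liminf (\<lambda>k. ereal (ln (real (\<Prod>i\<in>{k+1..l_index c \<theta> k}. nk i))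
                     / ((1 - 1/\<theta>) * ln (delta c k))))"
proof -
  define f where "f = (\<lambda>k. ereal (ln (real (\<Prod>i\<in>{k+1..l_index c \<theta> k}. nk i))
                     / ((1 - 1/\<theta>) * ln (delta c k))))"
  define SS where "SS = {s. s \<ge> 0 \<and> (\<exists>b>0. \<exists>C>0. \<forall>R. 0 < R \<and> R < b \<longrightarrow> (\<forall>x\<in>E.
        real (covering_number (R powr (1/\<theta>)) (cball x R \<inter> E))
          \<ge> C * (R / R powr (1/\<theta>)) powr s))}"
  have LS: "lower_spectrum \<theta> E = Sup (ereal ` SS)" unfolding lower_spectrum_def SS_def by simp
  have up: "ereal s \<le> liminf f" if "s \<in> SS" for s
  proof -
    from that obtain b C where s: "s \<ge> 0" and b: "b > 0" and C: "C > 0" and hyp: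
      "\<forall>R. 0 < R \<and> R < b \<longrightarrow> (\<forall>x\<in>E.
        real (covering_number (R powr (1/\<theta>)) (cball x R \<inter> E)) \<ge> C * (R / R powr (1/\<theta>)) powr s)"
      unfolding SS_def by blast
    show ?thesis
    proof (rule ccontr)
      assume "\<not> ereal s \<le> liminf f"
      then have "liminf f < ereal s" by simp
      then obtain z where z: "liminf f < ereal z" "ereal z < ereal s" using ereal_dense2 by blast
      then have zs: "z < s" by simp
      obtain K3 where K3: "\<forall>k\<ge>K3. s - (s - z) \<le> ln (real (\<Prod>i\<in>{k+1..l_index c \<theta> k}. nk i)) / ((1 - 1/\<theta>) * ln (delta c k))"
        using partII_ev[OF th s b C hyp, of "s - z"] zs by auto
      then have "eventually (\<lambda>k. ereal z \<le> f k) sequentially"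
        unfolding f_def eventually_sequentially by (intro exI[of _ K3]) auto
      then have "ereal z \<le> liminf f" by (rule Liminf_bounded)
      then show False using z by simp
    qed
  qed
  have SSI: "s \<in> SS" if s: "s \<ge> 0" and
    hyp: "\<forall>k\<ge>K2. s * (1/\<theta> - 1) * (- ln (delta c k)) \<le> ln (real (\<Prod>i\<in>{k+1..l_index c \<theta> k}. nk i))" for s K2
    using partI[OF th s hyp] s unfolding SS_def by blast
  have zero: "0 \<in> SS"
  proof (rule SSI[of 0 0])
    show "\<forall>k\<ge>0. 0 * (1/\<theta> - 1) * (- ln (delta c k)) \<le> ln (real (\<Prod>i\<in>{k+1..l_index c \<theta> k}. nk i))"
    proof (intro allI impI)
      fix k :: nat
      have "1 \<le> real (\<Prod>i\<in>{k+1..l_index c \<theta> k}. nk i)" using prod_ge1[of k "l_index c \<theta> k"] by linarith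
      then show "0 * (1/\<theta> - 1) * (- ln (delta c k)) \<le> ln (real (\<Prod>i\<in>{k+1..l_index c \<theta> k}. nk i))" by simp
    qed
  qed simp
  have low: "liminf f \<le> Sup (ereal ` SS)"
  proof (rule dense_le)
    fix y assume y: "y < liminf f"
    show "y \<le> Sup (ereal ` SS)"
    proof (cases "y \<le> 0")
      case True
      have "ereal 0 \<le> Sup (ereal ` SS)" using zero by (intro Sup_upper) auto
      then show ?thesis using True by (simp add: zero_ereal_def)
    next
      case False
      then have y0: "y > 0" by simp
      have "y \<noteq> \<infinity>" using y by auto
      then obtain s where ys: "y = ereal s" using y0 by (cases y) auto
      have s0: "s > 0" using y0 ys by simp
      have "eventually (\<lambda>k. y < f k) sequentially" by (rule less_LiminfD[OF y])
      then obtain N where N: "\<forall>k\<ge>N. y < f k" unfolding eventually_sequentially by blast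
      have "\<forall>k\<ge>max N 1. s * (1/\<theta> - 1) * (- ln (delta c k)) \<le> ln (real (\<Prod>i\<in>{k+1..l_index c \<theta> k}. nk i))"
      proof (intro allI impI)
        fix k assume k: "max N 1 \<le> k"
        then have lt: "s < ln (real (\<Prod>i\<in>{k+1..l_index c \<theta> k}. nk i)) / ((1 - 1/\<theta>) * ln (delta c k))"
          using N ys by (simp add: f_def)
        have "delta c k < 1" using delta_lt1 k by simp
        then have "ln (delta c k) < 0" using delta_pos[of k] by simp
        moreover have "1 - 1/\<theta> < 0" using th by (simp add: field_simps)
        ultimately have den: "(1 - 1/\<theta>) * ln (delta c k) > 0" by (simp add: mult_neg_neg)
        have "s * ((1 - 1/\<theta>) * ln (delta c k)) < ln (real (\<Prod>i\<in>{k+1..l_index c \<theta> k}. nk i))"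
          using lt den by (simp add: pos_less_divide_eq)
        then show "s * (1/\<theta> - 1) * (- ln (delta c k)) \<le> ln (real (\<Prod>i\<in>{k+1..l_index c \<theta> k}. nk i))"
          by (simp add: algebra_simps)
      qed
      then have "s \<in> SS" using SSI[of s "max N 1"] s0 by simp
      then show ?thesis unfolding ys by (intro Sup_upper) auto
    qed
  qed
  have "Sup (ereal ` SS) \<le> liminf f" using up by (intro Sup_least) auto
  then show ?thesis unfolding LS f_def[symmetric] using low by (rule antisym)
qed

end

theorem theorem4:
  fixes J :: "'a::euclidean_space set"
    and a c :: "nat \<Rightarrow> real" and nk :: "nat \<Rightarrow> nat" and \<theta> :: real and E :: "'a set"
  assumes a_pos: "\<forall>k\<ge>1. a k > 0" and a_sum: "summable a"
    and nk_ge: "\<forall>k\<ge>1. nk k \<ge> 2"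
    and c_bounds: "\<forall>k\<ge>1. 0 < c k \<and> c k < 1"
    and c_inf: "\<exists>\<eta>>0. \<forall>k\<ge>1. c k \<ge> \<eta>"
    and J_closed: "closed J" and J_bounded: "bounded J" and J_int: "interior J \<noteq> {}"
    and E_in: "E \<in> cantor_like_class J c nk a"
    and theta: "0 < \<theta>" "\<theta> < 1"
  shows "lower_spectrum \<theta> E =
    liminf (\<lambda>k. ereal (ln (real (\<Prod>i\<in>{k+1..l_index c \<theta> k}. nk i))
                     / ((1 - 1/\<theta>) * ln (delta c k))))"
proof -
  obtain JS :: "nat list \<Rightarrow> 'a set" where JS0: "JS [] = J"
    and H: "\<forall>k\<ge>1. \<forall>\<sigma>\<in>words nk (k - 1).
           (\<forall>j\<in>{1..nk k}.
              JS (\<sigma> @ [j]) \<subseteq> JS \<sigma> \<and>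
              geom_similar (JS \<sigma>) (JS (\<sigma> @ [j])) \<and>
              c k * (1 - a k) \<le> diameter (JS (\<sigma> @ [j])) / diameter (JS \<sigma>) \<and>
              diameter (JS (\<sigma> @ [j])) / diameter (JS \<sigma>) \<le> c k * (1 + a k)) \<and>
           (\<forall>j\<in>{1..nk k}. \<forall>j'\<in>{1..nk k}. j \<noteq> j' \<longrightarrow>
              interior (JS (\<sigma> @ [j])) \<inter> interior (JS (\<sigma> @ [j'])) = {})"
    and Edef: "E = (\<Inter>k\<in>{1..}. \<Union>\<sigma>\<in>words nk k. JS \<sigma>)"
    using E_in unfolding cantor_like_class_def by blast
  obtain \<eta> where eta: "\<eta> > 0" "\<forall>k\<ge>1. c k \<ge> \<eta>" using c_inf by blast
  interpret C: cantor J c a nk JS E \<eta>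
  proof (unfold_locales)
    show "compact J" using J_closed J_bounded by (simp add: compact_eq_bounded_closed)
    fix k \<sigma> j assume "\<sigma> \<in> words nk k" "j \<in> {1..nk (Suc k)}"
    then show "JS (\<sigma> @ [j]) \<subseteq> JS \<sigma> \<and> geom_similar (JS \<sigma>) (JS (\<sigma> @ [j])) \<and>
        c (Suc k) * (1 - a (Suc k)) \<le> diameter (JS (\<sigma> @ [j])) / diameter (JS \<sigma>) \<and>
        diameter (JS (\<sigma> @ [j])) / diameter (JS \<sigma>) \<le> c (Suc k) * (1 + a (Suc k))"
      using H[rule_format, of "Suc k" \<sigma>] by simp
  next
    fix k \<sigma> j j' assume "\<sigma> \<in> words nk k" "j \<in> {1..nk (Suc k)}" "j' \<in> {1..nk (Suc k)}" "j \<noteq> j'"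
    then show "interior (JS (\<sigma> @ [j])) \<inter> interior (JS (\<sigma> @ [j'])) = {}"
      using H[rule_format, of "Suc k" \<sigma>] by simp
  qed (use a_pos a_sum nk_ge c_bounds eta J_int JS0 Edef in auto)
  show ?thesis by (rule C.main[OF theta])
qed

end
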